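(* The map $\bar\beta\colon\mathrm{Aut}_M(\overline{\mathbb U})\to\mathrm{Aut}(\mathcal B_{\mathbb U})$ is an isomorphism of Polish groups.
   Context: $\mathbb U$ is the countable rational Urysohn ultrametric space viewed as a two-sorted ultrametric space with distance set $\mathbb Q_{\ge0}$, and $\overline{\mathbb U}$ is its Cauchy completion (same distance set). A dc-automorphism of a space $X$ is a bijection $f$ of points with an order automorphism $D_f$ of the distance set fixing $0$ with $d(f(x),f(y))=D_f(d(x,y))$. $\mathrm{Aut}_M(X)$ is the group of dc-automorphisms with basic neighbourhoods $N_{A,r}(f)=\{g:d(g(x),f(x))<r\ \forall x\in A\}$, $A$ finite, $r>0$. For $x\ne y$ put $B(x,y)=\{z:d(z,x)<d(x,y)\}$. $\mathcal B_{\mathbb U}=\{B(x,y):x\ne y\in\mathbb U\}$ is the structure with order $\supseteq$, adjacency relation $B\sim B'$ iff $B\ne B'$ and $B=B(x,y)$, $B'=B(y,x)$ for some $x,y$, level set $\mathbb Q_{\ge0}$ and level map $r(B(x,y))=d(x,y)$. $\mathrm{Aut}(\mathcal B_{\mathbb U})$ consists of bijections $g$ of $\mathcal B_{\mathbb U}$ preserving and reflecting $\subseteq$ and $\sim$, together with an order automorphism $\ell_g$ of $\mathbb Q_{\ge 0}$ with $r(g(B))=\ell_g(r(B))$, with the topology of pointwise convergence (both sorts discrete). For $f\in\mathrm{Aut}_M(\overline{\mathbb U})$, $\bar\beta(f)$ is given by $B_{\mathbb U}(x,y)\mapsto B_{\overline{\mathbb U}}(f(x),f(y))\cap\mathbb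 U$ for $x\ne y\in\mathbb U$, with level part $D_f$. *)

theory Defs
  imports "HOL-Analysis.Analysis" "HOL-Algebra.Group"
begin

text \<open>A space is a carrier set S of points of type 'a with a distance
function d into the rationals (the distance sort is the set of nonnegative rationals).\<close>

definition rat_ultrametric :: "'a set \<Rightarrow> ('a \<Rightarrow> 'a \<Rightarrow> rat) \<Rightarrow> bool" where
  "rat_ultrametric S d \<longleftrightarrow>
     (\<forall>x\<in>S. \<forall>y\<in>S. d x y \<ge> 0 \<and> (d x y = 0 \<longleftrightarrow> x = y) \<and> d x y = d y x) \<and>
     (\<forall>x\<in>S. \<forall>y\<in>S. \<forall>z\<in>S. d x z \<le> max (d x y) (d y z))"

text \<open>Extension property (Katetov/Fraisse): every one-point ultrametric extension
of a finite subset with rational distances is realised inside S.\<close>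

definition ultra_extension_property :: "'a set \<Rightarrow> ('a \<Rightarrow> 'a \<Rightarrow> rat) \<Rightarrow> bool" where
  "ultra_extension_property S d \<longleftrightarrow>
     (\<forall>A h. finite A \<and> A \<subseteq> S \<and> (\<forall>a\<in>A. h a > 0) \<and>
        (\<forall>a\<in>A. \<forall>b\<in>A. h a \<le> max (h b) (d b a) \<and> d a b \<le> max (h a) (h b))
      \<longrightarrow> (\<exists>z\<in>S. \<forall>a\<in>A. d z a = h a))"

text \<open>The countable rational Urysohn ultrametric space (characterised up to isometry).\<close>

definition rational_Urysohn_ultrametric :: "'a set \<Rightarrow> ('a \<Rightarrow> 'a \<Rightarrow> rat) \<Rightarrow> bool" where
  "rational_Urysohn_ultrametric S d \<longleftrightarrow>
     countable S \<and> rat_ultrametric S d \<and> ultra_extension_property S d"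

definition rat_cauchy :: "'a set \<Rightarrow> ('a \<Rightarrow> 'a \<Rightarrow> rat) \<Rightarrow> (nat \<Rightarrow> 'a) \<Rightarrow> bool" where
  "rat_cauchy X d s \<longleftrightarrow> (\<forall>n. s n \<in> X) \<and>
     (\<forall>e>0. \<exists>N. \<forall>m\<ge>N. \<forall>n\<ge>N. d (s m) (s n) < e)"

definition rat_converges :: "'a set \<Rightarrow> ('a \<Rightarrow> 'a \<Rightarrow> rat) \<Rightarrow> (nat \<Rightarrow> 'a) \<Rightarrow> 'a \<Rightarrow> bool" where
  "rat_converges X d s x \<longleftrightarrow> x \<in> X \<and> (\<forall>e>0. \<exists>N. \<forall>n\<ge>N. d (s n) x < e)"

definition is_completion :: "'a set \<Rightarrow> 'a set \<Rightarrow> ('a \<Rightarrow> 'a \<Rightarrow> rat) \<Rightarrow> bool" where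
  "is_completion U X d \<longleftrightarrow>
     U \<subseteq> X \<and> rat_ultrametric X d \<and>
     (\<forall>x\<in>X. \<forall>e>0. \<exists>u\<in>U. d x u < e) \<and>
     (\<forall>s. rat_cauchy X d s \<longrightarrow> (\<exists>x. rat_converges X d s x))"

definition dist_order_aut :: "(rat \<Rightarrow> rat) \<Rightarrow> bool" where
  "dist_order_aut D \<longleftrightarrow> bij_betw D {q. q \<ge> 0} {q. q \<ge> 0} \<and>
     (\<forall>p\<ge>0. \<forall>q\<ge>0. p \<le> q \<longleftrightarrow> D p \<le> D q) \<and> (\<forall>q<0. D q = q)"

definition dc_aut :: "'a set \<Rightarrow> ('a \<Rightarrow> 'a \<Rightarrow> rat) \<Rightarrow> ('a \<Rightarrow> 'a) \<times> (rat \<Rightarrow> rat) \<Rightarrow> bool" where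
  "dc_aut X d p \<longleftrightarrow> bij_betw (fst p) X X \<and> (\<forall>x. x \<notin> X \<longrightarrow> fst p x = x) \<and>
     dist_order_aut (snd p) \<and> snd p 0 = 0 \<and>
     (\<forall>x\<in>X. \<forall>y\<in>X. d (fst p x) (fst p y) = snd p (d x y))"

definition AutM :: "'a set \<Rightarrow> ('a \<Rightarrow> 'a \<Rightarrow> rat) \<Rightarrow> (('a \<Rightarrow> 'a) \<times> (rat \<Rightarrow> rat)) monoid" where
  "AutM X d = \<lparr>carrier = {p. dc_aut X d p},
               mult = (\<lambda>p q. (fst p \<circ> fst q, snd p \<circ> snd q)),
               one = (id, id)\<rparr>"

definition AutM_nbhd :: "'a set \<Rightarrow> ('a \<Rightarrow> 'a \<Rightarrow> rat) \<Rightarrow> 'a set \<Rightarrow> rat \<Rightarrow> ('a \<Rightarrow> 'a) \<times> (rat \<Rightarrow> rat)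
     \<Rightarrow> (('a \<Rightarrow> 'a) \<times> (rat \<Rightarrow> rat)) set" where
  "AutM_nbhd X d A r p = {q \<in> carrier (AutM X d). \<forall>x\<in>A. d (fst q x) (fst p x) < r}"

definition AutM_topology :: "'a set \<Rightarrow> ('a \<Rightarrow> 'a \<Rightarrow> rat) \<Rightarrow> (('a \<Rightarrow> 'a) \<times> (rat \<Rightarrow> rat)) topology" where
  "AutM_topology X d = topology_generated_by
     {AutM_nbhd X d A r p | A r p. finite A \<and> A \<subseteq> X \<and> r > 0 \<and> p \<in> carrier (AutM X d)}"

definition ball_in :: "'a set \<Rightarrow> ('a \<Rightarrow> 'a \<Rightarrow> rat) \<Rightarrow> 'a \<Rightarrow> 'a \<Rightarrow> 'a set" where
  "ball_in S d x y = {z \<in> S. d z x < d x y}"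

definition balls :: "'a set \<Rightarrow> ('a \<Rightarrow> 'a \<Rightarrow> rat) \<Rightarrow> 'a set set" where
  "balls S d = {ball_in S d x y | x y. x \<in> S \<and> y \<in> S \<and> x \<noteq> y}"

definition ball_adj :: "'a set \<Rightarrow> ('a \<Rightarrow> 'a \<Rightarrow> rat) \<Rightarrow> 'a set \<Rightarrow> 'a set \<Rightarrow> bool" where
  "ball_adj S d B B' \<longleftrightarrow> B \<noteq> B' \<and>
     (\<exists>x\<in>S. \<exists>y\<in>S. x \<noteq> y \<and> B = ball_in S d x y \<and> B' = ball_in S d y x)"

definition ball_level :: "'a set \<Rightarrow> ('a \<Rightarrow> 'a \<Rightarrow> rat) \<Rightarrow> 'a set \<Rightarrow> rat" where
  "ball_level S d B = (THE q. \<exists>x\<in>S. \<exists>y\<in>S. x \<noteq> y \<and> B = ball_in S d x y \<and> q = d x y)"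

definition ball_aut :: "'a set \<Rightarrow> ('a \<Rightarrow> 'a \<Rightarrow> rat) \<Rightarrow> ('a set \<Rightarrow> 'a set) \<times> (rat \<Rightarrow> rat) \<Rightarrow> bool" where
  "ball_aut S d p \<longleftrightarrow>
     bij_betw (fst p) (balls S d) (balls S d) \<and> (\<forall>B. B \<notin> balls S d \<longrightarrow> fst p B = B) \<and>
     (\<forall>B\<in>balls S d. \<forall>B'\<in>balls S d. B \<subseteq> B' \<longleftrightarrow> fst p B \<subseteq> fst p B') \<and>
     (\<forall>B\<in>balls S d. \<forall>B'\<in>balls S d. ball_adj S d B B' \<longleftrightarrow> ball_adj S d (fst p B) (fst p B')) \<and>
     dist_order_aut (snd p) \<and>
     (\<forall>B\<in>balls S d. ball_level S d (fst p B) = snd p (ball_level S d B))"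

definition AutB :: "'a set \<Rightarrow> ('a \<Rightarrow> 'a \<Rightarrow> rat) \<Rightarrow> (('a set \<Rightarrow> 'a set) \<times> (rat \<Rightarrow> rat)) monoid" where
  "AutB S d = \<lparr>carrier = {p. ball_aut S d p},
               mult = (\<lambda>p q. (fst p \<circ> fst q, snd p \<circ> snd q)),
               one = (id, id)\<rparr>"

text \<open>Pointwise convergence topology, both sorts discrete (subbasis).\<close>

definition AutB_topology :: "'a set \<Rightarrow> ('a \<Rightarrow> 'a \<Rightarrow> rat) \<Rightarrow> (('a set \<Rightarrow> 'a set) \<times> (rat \<Rightarrow> rat)) topology" where
  "AutB_topology S d = topology_generated_by
     ({carrier (AutB S d)} \<union>
      {{p \<in> carrier (AutB S d). fst p B = C} | B C. B \<in> balls S d} \<union>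
      {{p \<in> carrier (AutB S d). snd p q = s} | q s. q \<ge> 0})"

definition beta_bar :: "'a set \<Rightarrow> 'a set \<Rightarrow> ('a \<Rightarrow> 'a \<Rightarrow> rat) \<Rightarrow> ('a \<Rightarrow> 'a) \<times> (rat \<Rightarrow> rat)
     \<Rightarrow> ('a set \<Rightarrow> 'a set) \<times> (rat \<Rightarrow> rat)" where
  "beta_bar U X d p =
     ((\<lambda>B. if B \<in> balls U d then
             (SOME B'. \<exists>x\<in>U. \<exists>y\<in>U. x \<noteq> y \<and> B = ball_in U d x y \<and>
                         B' = ball_in X d (fst p x) (fst p y) \<inter> U)
           else B),
      snd p)"

definition Polish_space_top :: "'a topology \<Rightarrow> bool" where
  "Polish_space_top T \<longleftrightarrow> completely_metrizable_space T \<and> separable_space T"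

definition topological_group :: "('a, 'b) monoid_scheme \<Rightarrow> 'a topology \<Rightarrow> bool" where
  "topological_group G T \<longleftrightarrow> group G \<and> topspace T = carrier G \<and>
     continuous_map (prod_topology T T) T (\<lambda>(a, b). a \<otimes>\<^bsub>G\<^esub> b) \<and>
     continuous_map T T (\<lambda>a. inv\<^bsub>G\<^esub> a)"

definition Polish_group :: "('a, 'b) monoid_scheme \<Rightarrow> 'a topology \<Rightarrow> bool" where
  "Polish_group G T \<longleftrightarrow> topological_group G T \<and> Polish_space_top T"

definition Polish_group_iso ::
  "('a, 'c) monoid_scheme \<Rightarrow> 'a topology \<Rightarrow> ('b, 'd) monoid_scheme \<Rightarrow> 'b topology \<Rightarrow> ('a \<Rightarrow> 'b) \<Rightarrow> bool" where
  "Polish_group_iso G T H S h \<longleftrightarrow> Polish_group G T \<and> Polish_group H S \<and>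
     h \<in> iso G H \<and> homeomorphic_map T S h"

end

theory Submission
  imports Defs
begin

section \<open>Distance order automorphisms\<close>

lemma doa_mono: "dist_order_aut D \<Longrightarrow> 0 \<le> p \<Longrightarrow> 0 \<le> q \<Longrightarrow> p \<le> q \<longleftrightarrow> D p \<le> D q"
  unfolding dist_order_aut_def by blast

lemma doa_nonneg: "dist_order_aut D \<Longrightarrow> 0 \<le> p \<Longrightarrow> 0 \<le> D p"
  unfolding dist_order_aut_def bij_betw_def by auto

lemma doa_strict: "dist_order_aut D \<Longrightarrow> 0 \<le> p \<Longrightarrow> 0 \<le> q \<Longrightarrow> p < q \<longleftrightarrow> D p < D q"
  using doa_mono[of D p q] doa_mono[of D q p] by (meson not_le)

lemma doa_inj: "dist_order_aut D \<Longrightarrow> 0 \<le> p \<Longrightarrow> 0 \<le> q \<Longrightarrow> D p = D q \<longleftrightarrow> p = q"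
  using doa_mono[of D p q] doa_mono[of D q p] by auto

lemma doa_surj: "dist_order_aut D \<Longrightarrow> 0 \<le> t \<Longrightarrow> \<exists>s\<ge>0. D s = t"
proof -
  assume a: "dist_order_aut D" "0 \<le> t"
  then have "t \<in> D ` {q. 0 \<le> q}" unfolding dist_order_aut_def bij_betw_def by auto
  then show ?thesis by auto
qed

lemma doa_zero: assumes "dist_order_aut D" shows "D 0 = 0"
proof -
  obtain s where s: "s \<ge> 0" "D s = 0" using doa_surj[OF assms, of 0] by auto
  have "D 0 \<le> D s" using doa_mono[OF assms, of 0 s] s by auto
  moreover have "D 0 \<ge> 0" using doa_nonneg[OF assms, of 0] by simp
  ultimately show ?thesis using s by simp
qed

lemma doa_pos: "dist_order_aut D \<Longrightarrow> 0 < p \<Longrightarrow> 0 < D p"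
  using doa_strict[of D 0 p] doa_zero[of D] by auto

definition invD :: "(rat \<Rightarrow> rat) \<Rightarrow> rat \<Rightarrow> rat" where
  "invD D = (\<lambda>q. if 0 \<le> q then inv_into {q. 0 \<le> q} D q else q)"

lemma invD_props:
  assumes "dist_order_aut D"
  shows "dist_order_aut (invD D)" "\<And>q. invD D (D q) = q" "\<And>q. D (invD D q) = q"
proof -
  have b: "bij_betw D {q. 0 \<le> q} {q. 0 \<le> q}" using assms unfolding dist_order_aut_def by auto
  have neg: "\<And>q. q < 0 \<Longrightarrow> D q = q" using assms unfolding dist_order_aut_def by auto
  show 1: "invD D (D q) = q" for q
  proof (cases "0 \<le> q")
    case True then show ?thesis using b doa_nonneg[OF assms True]
      by (simp add: invD_def bij_betw_inv_into_left)
  next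
    case False then show ?thesis using neg by (simp add: invD_def)
  qed
  show 2: "D (invD D q) = q" for q
  proof (cases "0 \<le> q")
    case True then show ?thesis using b
      by (simp add: invD_def bij_betw_inv_into_right)
  next
    case False then show ?thesis using neg by (simp add: invD_def)
  qed
  have bi: "bij_betw (invD D) {q. 0 \<le> q} {q. 0 \<le> q}"
  proof -
    have "bij_betw (inv_into {q. 0 \<le> q} D) {q. 0 \<le> q} {q. 0 \<le> q}" using b bij_betw_inv_into by blast
    then show ?thesis by (rule bij_betw_cong[THEN iffD1, rotated]) (simp add: invD_def)
  qed
  have nn: "0 \<le> q \<Longrightarrow> 0 \<le> invD D q" for q using bi unfolding bij_betw_def by auto
  show "dist_order_aut (invD D)"
    unfolding dist_order_aut_def
  proof (intro conjI allI impI bi)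
    fix p q :: rat assume "0 \<le> p" "0 \<le> q"
    then have "invD D p \<le> invD D q \<longleftrightarrow> D (invD D p) \<le> D (invD D q)"
      using doa_mono[OF assms, of "invD D p" "invD D q"] nn by blast
    then show "p \<le> q \<longleftrightarrow> invD D p \<le> invD D q"
      unfolding 2 by simp
  next
    fix q :: rat assume "q < 0" then show "invD D q = q" by (simp add: invD_def)
  qed
qed

lemma doa_comp:
  assumes "dist_order_aut D" "dist_order_aut E"
  shows "dist_order_aut (D \<circ> E)"
  unfolding dist_order_aut_def
proof (intro conjI allI impI)
  show "bij_betw (D \<circ> E) {q. 0 \<le> q} {q. 0 \<le> q}"
    using assms unfolding dist_order_aut_def using bij_betw_trans by blast
next
  fix p q :: rat assume "0 \<le> p" "0 \<le> q"
  then show "p \<le> q \<longleftrightarrow> (D \<circ> E) p \<le> (D \<circ> E) q"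
    using doa_mono[OF assms(1), of "E p" "E q"] doa_mono[OF assms(2), of p q] doa_nonneg[OF assms(2)] by simp
next
  fix q :: rat assume "q < 0" then show "(D \<circ> E) q = q" using assms unfolding dist_order_aut_def by simp
qed

lemma doa_id: "dist_order_aut id"
  unfolding dist_order_aut_def by simp


lemma generate_topology_on_fin_base:
  assumes "generate_topology_on S s"
  shows "\<forall>x\<in>s. \<exists>F. finite F \<and> F \<subseteq> S \<and> F \<noteq> {} \<and> x \<in> \<Inter>F \<and> \<Inter>F \<subseteq> s"
  using assms
proof (induction rule: generate_topology_on.induct)
  case Empty then show ?case by simp
next
  case (Int a b)
  show ?case
  proof
    fix x assume "x \<in> a \<inter> b"
    then have xa: "x \<in> a" and xb: "x \<in> b" by auto
    obtain F1 where F1: "finite F1 \<and> F1 \<subseteq> S \<and> F1 \<noteq> {} \<and> x \<in> \<Inter>F1 \<and> \<Inter>F1 \<subseteq> a"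
      using bspec[OF Int.IH(1) xa] by (elim exE) 
    obtain F2 where F2: "finite F2 \<and> F2 \<subseteq> S \<and> F2 \<noteq> {} \<and> x \<in> \<Inter>F2 \<and> \<Inter>F2 \<subseteq> b"
      using bspec[OF Int.IH(2) xb] by (elim exE)
    have "\<Inter>(F1 \<union> F2) = \<Inter>F1 \<inter> \<Inter>F2" by (rule Inter_Un_distrib)
    then have "x \<in> \<Inter>(F1 \<union> F2) \<and> \<Inter>(F1 \<union> F2) \<subseteq> a \<inter> b" using F1 F2 by auto
    moreover have "finite (F1 \<union> F2) \<and> F1 \<union> F2 \<subseteq> S \<and> F1 \<union> F2 \<noteq> {}" using F1 F2 by simp
    ultimately show "\<exists>F. finite F \<and> F \<subseteq> S \<and> F \<noteq> {} \<and> x \<in> \<Inter>F \<and> \<Inter>F \<subseteq> a \<inter> b" by blast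
  qed
next
  case (UN K)
  show ?case
  proof
    fix x assume "x \<in> \<Union>K"
    then obtain k where k: "k \<in> K" "x \<in> k" by blast
    then obtain F where F: "finite F \<and> F \<subseteq> S \<and> F \<noteq> {} \<and> x \<in> \<Inter>F \<and> \<Inter>F \<subseteq> k" using bspec[OF UN.IH[OF k(1)] k(2)] by (elim exE)
    have "k \<subseteq> \<Union>K" using k(1) by (rule Union_upper)
    then have "\<Inter>F \<subseteq> \<Union>K" using F by (meson order_trans)
    then show "\<exists>F. finite F \<and> F \<subseteq> S \<and> F \<noteq> {} \<and> x \<in> \<Inter>F \<and> \<Inter>F \<subseteq> \<Union>K" using F by (intro exI[of _ F]) simp
  qed
next
  case (Basis s)
  then show ?case by (intro ballI exI[of _ "{s}"]) auto
qed

lemma second_countable_generated: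
  assumes "countable S"
  shows "second_countable (topology_generated_by S)"
  unfolding second_countable_def
proof (intro exI conjI ballI allI impI)
  let ?B = "Inter ` {F. finite F \<and> F \<subseteq> S \<and> F \<noteq> {}}"
  have "countable {F. finite F \<and> F \<subseteq> S}" using assms by (rule countable_Collect_finite_subset)
  then have "countable {F. finite F \<and> F \<subseteq> S \<and> F \<noteq> {}}" by (rule countable_subset[rotated]) auto
  then show "countable ?B" by simp
  fix V assume "V \<in> ?B"
  then obtain F where F: "finite F" "F \<subseteq> S" "F \<noteq> {}" "V = \<Inter>F" by auto
  show "openin (topology_generated_by S) V"
    unfolding F(4) by (rule openin_Inter) (use F topology_generated_by_Basis in auto)
next
  fix W x assume "openin (topology_generated_by S) W \<and> x \<in> W"
  then have "generate_topology_on S W" "x \<in> W" by (auto simp: openin_topology_generated_by_iff)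
  from bspec[OF generate_topology_on_fin_base[OF this(1)] this(2)]
  show "\<exists>V\<in>Inter ` {F. finite F \<and> F \<subseteq> S \<and> F \<noteq> {}}. x \<in> V \<and> V \<subseteq> W" by blast
qed

lemma continuous_map_generated_by:
  assumes "\<And>x. x \<in> topspace T \<Longrightarrow> f x \<in> \<Union>S"
    and "\<And>s. s \<in> S \<Longrightarrow> openin T {x \<in> topspace T. f x \<in> s}"
  shows "continuous_map T (topology_generated_by S) f"
  unfolding continuous_map_def
proof (intro conjI allI impI)
  show "f \<in> topspace T \<rightarrow> topspace (topology_generated_by S)" using assms(1) by auto
  fix W assume "openin (topology_generated_by S) W"
  then have "generate_topology_on S W" by (simp add: openin_topology_generated_by_iff)
  then show "openin T {x \<in> topspace T. f x \<in> W}"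
  proof (induction rule: generate_topology_on.induct)
    case Empty then show ?case by simp
  next
    case (Int a b)
    have "{x \<in> topspace T. f x \<in> a \<inter> b} = {x \<in> topspace T. f x \<in> a} \<inter> {x \<in> topspace T. f x \<in> b}" by auto
    then show ?case using Int by auto
  next
    case (UN K)
    have "{x \<in> topspace T. f x \<in> \<Union>K} = \<Union>((\<lambda>k. {x \<in> topspace T. f x \<in> k}) ` K)" by auto
    then show ?case using UN by auto
  next
    case (Basis s) then show ?case using assms(2) by auto
  qed
qed

lemma continuous_map_to_discrete:
  assumes "\<And>x. x \<in> topspace T \<Longrightarrow> f x \<in> Z"
    and "\<And>z. z \<in> Z \<Longrightarrow> openin T {x \<in> topspace T. f x = z}"
  shows "continuous_map T (discrete_topology Z) f"
  unfolding continuous_map_def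
proof (intro conjI allI impI)
  show "f \<in> topspace T \<rightarrow> topspace (discrete_topology Z)" using assms(1) by auto
  fix W assume "openin (discrete_topology Z) W"
  then have W: "W \<subseteq> Z" by simp
  have "{x \<in> topspace T. f x \<in> W} = \<Union>((\<lambda>z. {x \<in> topspace T. f x = z}) ` W)" by auto
  moreover have "openin T (\<Union>((\<lambda>z. {x \<in> topspace T. f x = z}) ` W))"
    using W assms(2) by (intro openin_Union) auto
  ultimately show "openin T {x \<in> topspace T. f x \<in> W}" by simp
qed

lemma continuous_discrete_preimage_open:
  assumes "continuous_map T (discrete_topology Z) f"
  shows "openin T {x \<in> topspace T. f x = z}"
proof -
  have "{x \<in> topspace T. f x = z} = {x \<in> topspace T. f x \<in> {z} \<inter> Z}"
    using assms by (auto simp: continuous_map_def)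
  moreover have "openin T {x \<in> topspace T. f x \<in> {z} \<inter> Z}"
    by (rule openin_continuous_map_preimage[OF assms]) simp
  ultimately show ?thesis by simp
qed

lemma continuous_discrete_preimage_closed:
  assumes "continuous_map T (discrete_topology Z) f"
  shows "closedin T {x \<in> topspace T. R (f x)}"
proof -
  have "{x \<in> topspace T. R (f x)} = {x \<in> topspace T. f x \<in> {z \<in> Z. R z}}"
    using assms by (auto simp: continuous_map_def)
  moreover have "closedin T {x \<in> topspace T. f x \<in> {z \<in> Z. R z}}"
    by (rule closedin_continuous_map_preimage[OF assms]) simp
  ultimately show ?thesis by simp
qed

lemma closedin_all:
  assumes "\<And>i. i \<in> I \<Longrightarrow> closedin T {x \<in> topspace T. P i x}"
  shows "closedin T {x \<in> topspace T. \<forall>i\<in>I. P i x}"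
proof -
  have e: "{x \<in> topspace T. \<forall>i\<in>I. P i x} = topspace T \<inter> \<Inter>((\<lambda>i. {x \<in> topspace T. P i x}) ` I)"
    by auto
  have "closedin T (topspace T \<inter> \<Inter>((\<lambda>i. {x \<in> topspace T. P i x}) ` I))"
  proof (cases "I = {}")
    case True then show ?thesis by simp
  next
    case False then show ?thesis using assms by (intro closedin_Int closedin_topspace closedin_Inter) auto
  qed
  then show ?thesis by (simp only: e)
qed

lemma closedin_conj:
  assumes "closedin T {x \<in> topspace T. P x}" "closedin T {x \<in> topspace T. Q x}"
  shows "closedin T {x \<in> topspace T. P x \<and> Q x}"
proof -
  have "{x \<in> topspace T. P x \<and> Q x} = {x \<in> topspace T. P x} \<inter> {x \<in> topspace T. Q x}" by auto
  then show ?thesis using assms by auto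
qed

definition bU :: "'a set \<Rightarrow> ('a \<Rightarrow> 'a \<Rightarrow> rat) \<Rightarrow> 'a \<Rightarrow> rat \<Rightarrow> 'a set" where
  "bU U d c r = {z \<in> U. d z c < r}"

locale UU =
  fixes U X :: "'a set" and d :: "'a \<Rightarrow> 'a \<Rightarrow> rat"
  assumes UR: "rational_Urysohn_ultrametric U d" and CP: "is_completion U X d"
begin

lemma UX: "U \<subseteq> X" using CP by (simp add: is_completion_def)

lemma ultraX: "rat_ultrametric X d" using CP by (simp add: is_completion_def)

lemma d_nonneg: "x \<in> X \<Longrightarrow> y \<in> X \<Longrightarrow> 0 \<le> d x y"
  using ultraX unfolding rat_ultrametric_def by blast
lemma d_zero: "x \<in> X \<Longrightarrow> y \<in> X \<Longrightarrow> d x y = 0 \<longleftrightarrow> x = y"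
  using ultraX unfolding rat_ultrametric_def by blast
lemma d_refl[simp]: "x \<in> X \<Longrightarrow> d x x = 0"
  using d_zero by blast
lemma d_sym: "x \<in> X \<Longrightarrow> y \<in> X \<Longrightarrow> d x y = d y x"
  using ultraX unfolding rat_ultrametric_def by blast
lemma d_ultra: "x \<in> X \<Longrightarrow> y \<in> X \<Longrightarrow> z \<in> X \<Longrightarrow> d x z \<le> max (d x y) (d y z)"
  using ultraX unfolding rat_ultrametric_def by blast
lemma d_pos: "x \<in> X \<Longrightarrow> y \<in> X \<Longrightarrow> x \<noteq> y \<Longrightarrow> 0 < d x y"
  using d_nonneg d_zero by (simp add: order_less_le)

lemma ultra_lt: "x \<in> X \<Longrightarrow> y \<in> X \<Longrightarrow> z \<in> X \<Longrightarrow> d x y < r \<Longrightarrow> d y z < r \<Longrightarrow> d x z < r"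
  using d_ultra[of x y z] by simp

lemma ultra_le: "x \<in> X \<Longrightarrow> y \<in> X \<Longrightarrow> z \<in> X \<Longrightarrow> d x y \<le> r \<Longrightarrow> d y z \<le> r \<Longrightarrow> d x z \<le> r"
  using d_ultra[of x y z] by simp

lemma dense: "x \<in> X \<Longrightarrow> 0 < e \<Longrightarrow> \<exists>u\<in>U. d x u < e"
  using CP unfolding is_completion_def by blast

lemma complete: "rat_cauchy X d s \<Longrightarrow> \<exists>x. rat_converges X d s x"
  using CP unfolding is_completion_def by blast

lemma ext1: assumes "u \<in> U" "0 < r" shows "\<exists>z\<in>U. d z u = r"
proof -
  have ep: "ultra_extension_property U d" using UR by (simp add: rational_Urysohn_ultrametric_def)
  have uX: "u \<in> X" using assms UX by auto
  have "finite {u} \<and> {u} \<subseteq> U \<and> (\<forall>a\<in>{u}. (\<lambda>_. r) a > 0) \<and>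
        (\<forall>a\<in>{u}. \<forall>b\<in>{u}. (\<lambda>_. r) a \<le> max ((\<lambda>_. r) b) (d b a) \<and> d a b \<le> max ((\<lambda>_. r) a) ((\<lambda>_. r) b))"
    using assms uX by simp
  moreover have key: "\<forall>A h. finite A \<and> A \<subseteq> U \<and> (\<forall>a\<in>A. h a > 0) \<and>
        (\<forall>a\<in>A. \<forall>b\<in>A. h a \<le> max (h b) (d b a) \<and> d a b \<le> max (h a) (h b))
      \<longrightarrow> (\<exists>z\<in>U. \<forall>a\<in>A. d z a = h a)" using ep unfolding ultra_extension_property_def by blast
  ultimately have "\<exists>z\<in>U. \<forall>a\<in>{u}. d z a = (\<lambda>_. r) a"
    by (rule_tac mp[OF spec[OF spec[OF key, of "{u}"], of "\<lambda>_. r"]])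
  then show ?thesis by simp
qed

lemma U_nonempty: "U \<noteq> {}"
proof -
  have ep: "ultra_extension_property U d" using UR by (simp add: rational_Urysohn_ultrametric_def)
  have key: "\<forall>A h. finite A \<and> A \<subseteq> U \<and> (\<forall>a\<in>A. h a > 0) \<and>
        (\<forall>a\<in>A. \<forall>b\<in>A. h a \<le> max (h b) (d b a) \<and> d a b \<le> max (h a) (h b))
      \<longrightarrow> (\<exists>z\<in>U. \<forall>a\<in>A. d z a = h a)" using ep unfolding ultra_extension_property_def by blast
  have "\<exists>z\<in>U. \<forall>a\<in>{}. d z a = (\<lambda>_. (1::rat)) a"
    by (rule mp[OF spec[OF spec[OF key, of "{}"], of "\<lambda>_. 1"]]) simp
  then show ?thesis by blast
qed

lemma countable_U: "countable U"
  using UR by (simp add: rational_Urysohn_ultrametric_def)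

lemma near_point:
  assumes "c \<in> X" "0 < r"
  obtains u where "u \<in> U" "d c u < r" "d u c < r"
  using dense[OF assms] assms UX d_sym by auto

lemma bU_sub:
  assumes c: "c \<in> X" "c' \<in> X" and r: "0 < r" "0 < r'"
  shows "bU U d c r \<subseteq> bU U d c' r' \<longleftrightarrow> r \<le> r' \<and> d c c' < r'"
proof
  assume "r \<le> r' \<and> d c c' < r'"
  then show "bU U d c r \<subseteq> bU U d c' r'"
    unfolding bU_def using c UX ultra_lt[of _ c c' r'] by auto
next
  assume sub: "bU U d c r \<subseteq> bU U d c' r'"
  obtain u where u: "u \<in> U" "d c u < min r r'" "d u c < min r r'"
    using near_point[OF c(1), of "min r r'"] r by auto
  have uX: "u \<in> X" using u UX by auto
  have "u \<in> bU U d c r" unfolding bU_def using u by simp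
  then have u': "d u c' < r'" using sub unfolding bU_def by auto
  have cc: "d c c' < r'" using ultra_lt[of c u c' r'] u u' c uX by simp
  have "r \<le> r'"
  proof (rule ccontr)
    assume "\<not> r \<le> r'"
    then have rr: "r' < r" by simp
    obtain z where z: "z \<in> U" "d z u = r'" using ext1[OF u(1) r(2)] by auto
    have zX: "z \<in> X" using z UX by auto
    have "d z c \<le> r'" using ultra_le[of z u c r'] z u zX uX c by simp
    then have "z \<in> bU U d c r" unfolding bU_def using z rr by simp
    then have zc': "d z c' < r'" using sub unfolding bU_def by auto
    have "d c' u < r'" using ultra_lt[of c' c u r'] cc u c uX d_sym by simp
    then have "d z u < r'" using ultra_lt[of z c' u r'] zc' zX uX c by simp
    then show False using z by simp
  qed
  then show "r \<le> r' \<and> d c c' < r'" using cc by simp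
qed

lemma bU_eq:
  assumes c: "c \<in> X" "c' \<in> X" and r: "0 < r" "0 < r'"
  shows "bU U d c r = bU U d c' r' \<longleftrightarrow> r = r' \<and> d c c' < r"
  using bU_sub[OF c r] bU_sub[OF c(2,1) r(2,1)] d_sym[OF c] by auto

lemma ball_in_bU: "x \<in> U \<Longrightarrow> ball_in U d x y = bU U d x (d x y)"
  unfolding ball_in_def bU_def by simp

lemma bU_in_balls:
  assumes c: "c \<in> X" and r: "0 < r"
  shows "bU U d c r \<in> balls U d"
proof -
  obtain u where u: "u \<in> U" "d c u < r" "d u c < r" using near_point[OF c r] by blast
  obtain y where y: "y \<in> U" "d y u = r" using ext1[OF u(1) r] by auto
  have uX: "u \<in> X" and yX: "y \<in> X" using u y UX by auto
  have duy: "d u y = r" using y d_sym uX yX by simp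
  have "u \<noteq> y" using duy r uX by auto
  moreover have "ball_in U d u y = bU U d c r"
    using ball_in_bU[OF u(1), of y] duy bU_eq[OF uX c r r] u by simp
  ultimately show ?thesis unfolding balls_def using u(1) y(1) by blast
qed

lemma balls_bU:
  assumes "B \<in> balls U d"
  obtains c r where "c \<in> U" "0 < r" "B = bU U d c r"
proof -
  obtain x y where xy: "x \<in> U" "y \<in> U" "x \<noteq> y" "B = ball_in U d x y"
    using assms unfolding balls_def by blast
  have "0 < d x y" using d_pos xy UX by auto
  then show ?thesis using that[of x "d x y"] xy ball_in_bU by simp
qed

lemma level_bU:
  assumes c: "c \<in> X" and r: "0 < r"
  shows "ball_level U d (bU U d c r) = r"
  unfolding ball_level_def
proof (rule the_equality)
  obtain u where u: "u \<in> U" "d c u < r" "d u c < r" using near_point[OF c r] by blast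
  obtain y where y: "y \<in> U" "d y u = r" using ext1[OF u(1) r] by auto
  have uX: "u \<in> X" and yX: "y \<in> X" using u y UX by auto
  have duy: "d u y = r" using y d_sym uX yX by simp
  have "u \<noteq> y" using duy r uX by auto
  moreover have "ball_in U d u y = bU U d c r"
    using ball_in_bU[OF u(1), of y] duy bU_eq[OF uX c r r] u by simp
  ultimately show "\<exists>x\<in>U. \<exists>y\<in>U. x \<noteq> y \<and> bU U d c r = ball_in U d x y \<and> r = d x y"
    using u(1) y(1) duy by metis
next
  fix q assume "\<exists>x\<in>U. \<exists>y\<in>U. x \<noteq> y \<and> bU U d c r = ball_in U d x y \<and> q = d x y"
  then obtain x y where xy: "x \<in> U" "y \<in> U" "x \<noteq> y" "bU U d c r = ball_in U d x y" "q = d x y" by blast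
  have xX: "x \<in> X" "y \<in> X" using xy UX by auto
  have "0 < d x y" using d_pos xy xX by auto
  then show "q = r" using bU_eq[OF c xX(1) r, of "d x y"] xy ball_in_bU by simp
qed

lemma level_pos: "B \<in> balls U d \<Longrightarrow> 0 < ball_level U d B"
  by (metis balls_bU level_bU UX subsetD)

lemma adj_bU:
  assumes c: "c \<in> X" "c' \<in> X" and r: "0 < r" "0 < r'"
  shows "ball_adj U d (bU U d c r) (bU U d c' r') \<longleftrightarrow> r = r' \<and> d c c' = r"
proof
  assume "ball_adj U d (bU U d c r) (bU U d c' r')"
  then obtain x y where xy: "x \<in> U" "y \<in> U" "x \<noteq> y" "bU U d c r = ball_in U d x y"
     "bU U d c' r' = ball_in U d y x" unfolding ball_adj_def by blast
  have xX: "x \<in> X" "y \<in> X" using xy UX by auto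
  have p: "0 < d x y" using d_pos xy xX by auto
  have e1: "r = d x y" "d c x < r" using bU_eq[OF c(1) xX(1) r(1) p] xy ball_in_bU by auto
  have e2: "r' = d x y" "d c' y < r'" using bU_eq[OF c(2) xX(2) r(2), of "d y x"] xy ball_in_bU d_sym[OF xX] p by auto
  have "d c c' \<le> r" using ultra_le[of c x c' r] ultra_le[of x y c' r] e1 e2 c xX d_sym by auto
  moreover have "\<not> d c c' < r"
  proof
    assume "d c c' < r"
    then have "d x c' < r" using ultra_lt[of x c c' r] e1 c xX d_sym by auto
    then have "d x y < r" using ultra_lt[of x c' y r] e1 e2 c xX d_sym by auto
    then show False using e1 by simp
  qed
  ultimately show "r = r' \<and> d c c' = r" using e1 e2 by simp
next
  assume a: "r = r' \<and> d c c' = r"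
  obtain x where x: "x \<in> U" "d c x < r" "d x c < r" using near_point[OF c(1) r(1)] by blast
  obtain y where y: "y \<in> U" "d c' y < r" "d y c' < r" using near_point[OF c(2) r(1)] by blast
  have xX: "x \<in> X" "y \<in> X" using x y UX by auto
  have "d x c' = r"
  proof -
    have "d x c' \<le> r" using ultra_le[of x c c' r] x a c xX by simp
    moreover have "\<not> d x c' < r"
      using ultra_lt[of c x c' r] x a c xX by auto
    ultimately show ?thesis by simp
  qed
  then have dxy: "d x y = r"
  proof -
    assume h: "d x c' = r"
    have "d x y \<le> r" using ultra_le[of x c' y r] h y c xX d_sym by simp
    moreover have "\<not> d x y < r" using ultra_lt[of x y c' r] y h c xX by auto
    ultimately show ?thesis by simp
  qed
  have xy: "x \<noteq> y" using dxy r xX by auto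
  have b1: "bU U d c r = ball_in U d x y" using ball_in_bU[OF x(1)] dxy bU_eq[OF c(1) xX(1) r(1) r(1)] x by simp
  have b2: "bU U d c' r' = ball_in U d y x" using ball_in_bU[OF y(1)] dxy d_sym[OF xX] bU_eq[OF c(2) xX(2) r(2) r(2)] y a by simp
  have ne: "bU U d c r \<noteq> bU U d c' r'" using bU_eq[OF c r] a by simp
  show "ball_adj U d (bU U d c r) (bU U d c' r')"
    unfolding ball_adj_def using ne b1 b2 x(1) y(1) xy by blast
qed

end

section \<open>Group structures\<close>

lemma dc_autD:
  assumes "dc_aut X d p"
  shows "bij_betw (fst p) X X" "\<And>x. x \<notin> X \<Longrightarrow> fst p x = x" "dist_order_aut (snd p)" "snd p 0 = 0"
    "\<And>x y. x \<in> X \<Longrightarrow> y \<in> X \<Longrightarrow> d (fst p x) (fst p y) = snd p (d x y)"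
    "\<And>x. x \<in> X \<Longrightarrow> fst p x \<in> X"
  using assms unfolding dc_aut_def bij_betw_def by auto

definition invM :: "'a set \<Rightarrow> ('a \<Rightarrow> 'a) \<times> (rat \<Rightarrow> rat) \<Rightarrow> ('a \<Rightarrow> 'a) \<times> (rat \<Rightarrow> rat)" where
  "invM X p = ((\<lambda>x. if x \<in> X then inv_into X (fst p) x else x), invD (snd p))"

lemma invM_dc:
  assumes "dc_aut X d p"
  shows "dc_aut X d (invM X p)"
proof -
  note D = dc_autD[OF assms]
  have b: "bij_betw (\<lambda>x. if x \<in> X then inv_into X (fst p) x else x) X X"
  proof -
    have "bij_betw (inv_into X (fst p)) X X" using D(1) bij_betw_inv_into by blast
    then show ?thesis by (rule bij_betw_cong[THEN iffD1, rotated]) simp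
  qed
  have iD: "dist_order_aut (invD (snd p))" "\<And>q. invD (snd p) (snd p q) = q" using invD_props[OF D(3)] by auto
  have inx: "\<And>x. x \<in> X \<Longrightarrow> inv_into X (fst p) x \<in> X" using b unfolding bij_betw_def by auto
  have fi: "\<And>x. x \<in> X \<Longrightarrow> fst p (inv_into X (fst p) x) = x" using D(1) by (simp add: bij_betw_inv_into_right)
  show ?thesis unfolding dc_aut_def invM_def fst_conv snd_conv
  proof (intro conjI allI impI ballI b iD(1))
    show "invD (snd p) 0 = 0" using iD(2)[of 0] D(4) by simp
  next
    fix x y assume xy: "x \<in> X" "y \<in> X"
    have "d x y = snd p (d (inv_into X (fst p) x) (inv_into X (fst p) y))"
      using D(5)[OF inx[OF xy(1)] inx[OF xy(2)]] fi xy by simp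
    then show "d (if x \<in> X then inv_into X (fst p) x else x) (if y \<in> X then inv_into X (fst p) y else y) =
          invD (snd p) (d x y)" using xy iD(2) by simp
  qed simp
qed

lemma invM_left:
  assumes "dc_aut X d p"
  shows "((\<lambda>x. if x \<in> X then inv_into X (fst p) x else x) \<circ> fst p, invD (snd p) \<circ> snd p) = (id, id)"
proof -
  note D = dc_autD[OF assms]
  have "((\<lambda>x. if x \<in> X then inv_into X (fst p) x else x) \<circ> fst p) x = x" for x
  proof (cases "x \<in> X")
    case True then show ?thesis using D(1,6) by (simp add: bij_betw_inv_into_left)
  next
    case False then show ?thesis using D(2) by simp
  qed
  moreover have "(invD (snd p) \<circ> snd p) q = q" for q using invD_props[OF D(3)] by simp
  ultimately show ?thesis by auto
qed

lemma dc_comp: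
  assumes "dc_aut X d p" "dc_aut X d q"
  shows "dc_aut X d (fst p \<circ> fst q, snd p \<circ> snd q)"
proof -
  note P = dc_autD[OF assms(1)] and Q = dc_autD[OF assms(2)]
  show ?thesis unfolding dc_aut_def fst_conv snd_conv
  proof (intro conjI allI impI ballI)
    show "bij_betw (fst p \<circ> fst q) X X" using P(1) Q(1) bij_betw_trans by blast
    show "dist_order_aut (snd p \<circ> snd q)" using doa_comp P(3) Q(3) by blast
  qed (use P Q in auto)
qed

lemma dc_id: "dc_aut X d (id, id)"
  unfolding dc_aut_def by (simp add: doa_id)

lemma group_AutM: "group (AutM X d)"
proof (rule groupI)
  fix x y assume "x \<in> carrier (AutM X d)" "y \<in> carrier (AutM X d)"
  then show "x \<otimes>\<^bsub>AutM X d\<^esub> y \<in> carrier (AutM X d)" by (simp add: AutM_def dc_comp)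
next
  show "\<one>\<^bsub>AutM X d\<^esub> \<in> carrier (AutM X d)" by (simp add: AutM_def dc_id)
next
  fix x y z assume "x \<in> carrier (AutM X d)" "y \<in> carrier (AutM X d)" "z \<in> carrier (AutM X d)"
  then show "x \<otimes>\<^bsub>AutM X d\<^esub> y \<otimes>\<^bsub>AutM X d\<^esub> z = x \<otimes>\<^bsub>AutM X d\<^esub> (y \<otimes>\<^bsub>AutM X d\<^esub> z)"
    by (simp add: AutM_def comp_assoc)
next
  fix x assume "x \<in> carrier (AutM X d)"
  then show "\<one>\<^bsub>AutM X d\<^esub> \<otimes>\<^bsub>AutM X d\<^esub> x = x" by (simp add: AutM_def)
next
  fix x assume x: "x \<in> carrier (AutM X d)"
  then have h: "dc_aut X d x" by (simp add: AutM_def)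
  have "invM X x \<in> carrier (AutM X d)" using invM_dc[OF h] by (simp add: AutM_def)
  moreover have "invM X x \<otimes>\<^bsub>AutM X d\<^esub> x = \<one>\<^bsub>AutM X d\<^esub>" using invM_left[OF h] by (simp add: AutM_def invM_def)
  ultimately show "\<exists>y\<in>carrier (AutM X d). y \<otimes>\<^bsub>AutM X d\<^esub> x = \<one>\<^bsub>AutM X d\<^esub>" by blast
qed

lemma inv_AutM:
  assumes "p \<in> carrier (AutM X d)"
  shows "inv\<^bsub>AutM X d\<^esub> p = invM X p"
proof -
  have dc: "dc_aut X d p" using assms by (simp add: AutM_def)
  show ?thesis
  proof (rule group.inv_equality[OF group_AutM])
    show "invM X p \<otimes>\<^bsub>AutM X d\<^esub> p = \<one>\<^bsub>AutM X d\<^esub>" using invM_left[OF dc] by (simp add: AutM_def invM_def)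
    show "invM X p \<in> carrier (AutM X d)" using invM_dc[OF dc] by (simp add: AutM_def)
  qed (rule assms)
qed

lemma ball_autD:
  assumes "ball_aut S d p"
  shows "bij_betw (fst p) (balls S d) (balls S d)" "\<And>B. B \<notin> balls S d \<Longrightarrow> fst p B = B"
    "\<And>B B'. B \<in> balls S d \<Longrightarrow> B' \<in> balls S d \<Longrightarrow> B \<subseteq> B' \<longleftrightarrow> fst p B \<subseteq> fst p B'"
    "\<And>B B'. B \<in> balls S d \<Longrightarrow> B' \<in> balls S d \<Longrightarrow> ball_adj S d B B' \<longleftrightarrow> ball_adj S d (fst p B) (fst p B')"
    "dist_order_aut (snd p)"
    "\<And>B. B \<in> balls S d \<Longrightarrow> ball_level S d (fst p B) = snd p (ball_level S d B)"
    "\<And>B. B \<in> balls S d \<Longrightarrow> fst p B \<in> balls S d"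
  using assms unfolding ball_aut_def bij_betw_def by auto

definition invB :: "'a set \<Rightarrow> ('a \<Rightarrow> 'a \<Rightarrow> rat) \<Rightarrow> ('a set \<Rightarrow> 'a set) \<times> (rat \<Rightarrow> rat) \<Rightarrow> ('a set \<Rightarrow> 'a set) \<times> (rat \<Rightarrow> rat)" where
  "invB S d p = ((\<lambda>B. if B \<in> balls S d then inv_into (balls S d) (fst p) B else B), invD (snd p))"

lemma invB_ball_aut:
  assumes "ball_aut S d p"
  shows "ball_aut S d (invB S d p)"
proof -
  note P = ball_autD[OF assms]
  let ?h = "inv_into (balls S d) (fst p)"
  have bh: "bij_betw ?h (balls S d) (balls S d)" using P(1) bij_betw_inv_into by blast
  have b: "bij_betw (\<lambda>B. if B \<in> balls S d then ?h B else B) (balls S d) (balls S d)"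
    using bh by (rule bij_betw_cong[THEN iffD1, rotated]) simp
  have hin: "\<And>B. B \<in> balls S d \<Longrightarrow> ?h B \<in> balls S d" using bh unfolding bij_betw_def by auto
  have gh: "\<And>B. B \<in> balls S d \<Longrightarrow> fst p (?h B) = B" using P(1) by (simp add: bij_betw_inv_into_right)
  have iD: "dist_order_aut (invD (snd p))" "\<And>q. invD (snd p) (snd p q) = q" using invD_props[OF P(5)] by auto
  show ?thesis unfolding ball_aut_def invB_def fst_conv snd_conv
  proof (intro conjI allI impI ballI b iD(1))
    fix B B' assume BB: "B \<in> balls S d" "B' \<in> balls S d"
    show "B \<subseteq> B' \<longleftrightarrow> (if B \<in> balls S d then ?h B else B) \<subseteq> (if B' \<in> balls S d then ?h B' else B')"
      using P(3)[OF hin[OF BB(1)] hin[OF BB(2)]] gh BB by simp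
    show "ball_adj S d B B' \<longleftrightarrow> ball_adj S d (if B \<in> balls S d then ?h B else B) (if B' \<in> balls S d then ?h B' else B')"
      using P(4)[OF hin[OF BB(1)] hin[OF BB(2)]] gh BB by simp
  next
    fix B assume B: "B \<in> balls S d"
    have "ball_level S d B = snd p (ball_level S d (?h B))" using P(6)[OF hin[OF B]] gh[OF B] by simp
    then show "ball_level S d (if B \<in> balls S d then ?h B else B) = invD (snd p) (ball_level S d B)"
      using B iD(2) by simp
  qed simp
qed

lemma invB_left:
  assumes "ball_aut S d p"
  shows "((\<lambda>B. if B \<in> balls S d then inv_into (balls S d) (fst p) B else B) \<circ> fst p, invD (snd p) \<circ> snd p) = (id, id)"
proof -
  note P = ball_autD[OF assms]
  have "((\<lambda>B. if B \<in> balls S d then inv_into (balls S d) (fst p) B else B) \<circ> fst p) B = B" for B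
  proof (cases "B \<in> balls S d")
    case True then show ?thesis using P(1,7) by (simp add: bij_betw_inv_into_left)
  next
    case False then show ?thesis using P(2) by simp
  qed
  moreover have "(invD (snd p) \<circ> snd p) q = q" for q using invD_props[OF P(5)] by simp
  ultimately show ?thesis by auto
qed

lemma ball_aut_comp:
  assumes "ball_aut S d p" "ball_aut S d q"
  shows "ball_aut S d (fst p \<circ> fst q, snd p \<circ> snd q)"
proof -
  note P = ball_autD[OF assms(1)] and Q = ball_autD[OF assms(2)]
  show ?thesis unfolding ball_aut_def fst_conv snd_conv
  proof (intro conjI allI impI ballI)
    show "bij_betw (fst p \<circ> fst q) (balls S d) (balls S d)" using P(1) Q(1) bij_betw_trans by blast
    show "dist_order_aut (snd p \<circ> snd q)" using doa_comp P(5) Q(5) by blast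
  next
    fix B B' assume BB: "B \<in> balls S d" "B' \<in> balls S d"
    show "B \<subseteq> B' \<longleftrightarrow> (fst p \<circ> fst q) B \<subseteq> (fst p \<circ> fst q) B'"
      using P(3)[OF Q(7)[OF BB(1)] Q(7)[OF BB(2)]] Q(3)[OF BB] by simp
    show "ball_adj S d B B' \<longleftrightarrow> ball_adj S d ((fst p \<circ> fst q) B) ((fst p \<circ> fst q) B')"
      using P(4)[OF Q(7)[OF BB(1)] Q(7)[OF BB(2)]] Q(4)[OF BB] by simp
  next
    fix B assume B: "B \<in> balls S d"
    show "ball_level S d ((fst p \<circ> fst q) B) = (snd p \<circ> snd q) (ball_level S d B)"
      using P(6)[OF Q(7)[OF B]] Q(6)[OF B] by simp
  next
    fix B assume "B \<notin> balls S d" then show "(fst p \<circ> fst q) B = B" using P(2) Q(2) by simp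
  qed
qed

lemma ball_aut_id: "ball_aut S d (id, id)"
  unfolding ball_aut_def by (simp add: doa_id)

lemma group_AutB: "group (AutB S d)"
proof (rule groupI)
  fix x y assume "x \<in> carrier (AutB S d)" "y \<in> carrier (AutB S d)"
  then show "x \<otimes>\<^bsub>AutB S d\<^esub> y \<in> carrier (AutB S d)" by (simp add: AutB_def ball_aut_comp)
next
  show "\<one>\<^bsub>AutB S d\<^esub> \<in> carrier (AutB S d)" by (simp add: AutB_def ball_aut_id)
next
  fix x y z assume "x \<in> carrier (AutB S d)" "y \<in> carrier (AutB S d)" "z \<in> carrier (AutB S d)"
  then show "x \<otimes>\<^bsub>AutB S d\<^esub> y \<otimes>\<^bsub>AutB S d\<^esub> z = x \<otimes>\<^bsub>AutB S d\<^esub> (y \<otimes>\<^bsub>AutB S d\<^esub> z)"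
    by (simp add: AutB_def comp_assoc)
next
  fix x assume "x \<in> carrier (AutB S d)"
  then show "\<one>\<^bsub>AutB S d\<^esub> \<otimes>\<^bsub>AutB S d\<^esub> x = x" by (simp add: AutB_def)
next
  fix x assume x: "x \<in> carrier (AutB S d)"
  then have h: "ball_aut S d x" by (simp add: AutB_def)
  have "invB S d x \<in> carrier (AutB S d)" using invB_ball_aut[OF h] by (simp add: AutB_def)
  moreover have "invB S d x \<otimes>\<^bsub>AutB S d\<^esub> x = \<one>\<^bsub>AutB S d\<^esub>" using invB_left[OF h] by (simp add: AutB_def invB_def)
  ultimately show "\<exists>y\<in>carrier (AutB S d). y \<otimes>\<^bsub>AutB S d\<^esub> x = \<one>\<^bsub>AutB S d\<^esub>" by blast
qed

lemma inv_AutB: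
  assumes "p \<in> carrier (AutB S d)"
  shows "inv\<^bsub>AutB S d\<^esub> p = invB S d p"
proof -
  have dc: "ball_aut S d p" using assms by (simp add: AutB_def)
  show ?thesis
  proof (rule group.inv_equality[OF group_AutB])
    show "invB S d p \<otimes>\<^bsub>AutB S d\<^esub> p = \<one>\<^bsub>AutB S d\<^esub>" using invB_left[OF dc] by (simp add: AutB_def invB_def)
    show "invB S d p \<in> carrier (AutB S d)" using invB_ball_aut[OF dc] by (simp add: AutB_def)
  qed (rule assms)
qed

section \<open>The map beta-bar\<close>

lemma rat_arch: "0 < (e::rat) \<Longrightarrow> \<exists>N::nat. 1 / (of_nat N + 1) < e"
proof -
  assume e: "0 < e"
  obtain n :: nat where n: "n > 0" "inverse (of_nat n) < e" using ex_inverse_of_nat_less[OF e] by blast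
  have "of_nat (n - 1) + (1::rat) = of_nat n" using n(1) by (simp add: of_nat_diff)
  then have "1 / (of_nat (n - 1) + 1) < e" using n(2) by (simp add: divide_inverse)
  then show ?thesis by blast
qed

lemma rat_frac_mono: "(N::nat) \<le> n \<Longrightarrow> 1 / (of_nat n + 1) \<le> (1::rat) / (of_nat N + 1)"
  by (rule divide_left_mono) auto

lemma eq_from_lt:
  fixes a b :: rat
  assumes "0 \<le> a" "0 \<le> b" "\<And>t. 0 < t \<Longrightarrow> a < t \<longleftrightarrow> b < t"
  shows "a = b"
proof (rule ccontr)
  assume "a \<noteq> b"
  then consider "a < b" | "b < a" by linarith
  then show False
  proof cases
    case 1
    then have "0 < (a + b) / 2" "a < (a + b) / 2" "\<not> b < (a + b) / 2" using assms by auto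
    then show False using assms(3) by blast
  next
    case 2
    then have "0 < (a + b) / 2" "b < (a + b) / 2" "\<not> a < (a + b) / 2" using assms by auto
    then show False using assms(3) by blast
  qed
qed

context UU
begin

lemma beta_bU:
  assumes p: "dc_aut X d p" and c: "c \<in> X" and r: "0 < r"
  shows "fst (beta_bar U X d p) (bU U d c r) = bU U d (fst p c) (snd p r)"
proof -
  note P = dc_autD[OF p]
  let ?B = "bU U d c r"
  have Bb: "?B \<in> balls U d" using bU_in_balls[OF c r] .
  let ?P = "\<lambda>B'. \<exists>x\<in>U. \<exists>y\<in>U. x \<noteq> y \<and> ?B = ball_in U d x y \<and> B' = ball_in X d (fst p x) (fst p y) \<inter> U"
  have ex: "\<exists>B'. ?P B'" using Bb unfolding balls_def by blast
  have "?P (SOME B'. ?P B')" using someI_ex[OF ex] .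
  then obtain x y where xy: "x \<in> U" "y \<in> U" "x \<noteq> y" "?B = ball_in U d x y"
     and e: "(SOME B'. ?P B') = ball_in X d (fst p x) (fst p y) \<inter> U" by blast
  have xX: "x \<in> X" "y \<in> X" using xy UX by auto
  have pos: "0 < d x y" using d_pos xX xy by auto
  have r1: "r = d x y" and r2: "d c x < r" using bU_eq[OF c xX(1) r pos] xy ball_in_bU by auto
  have "ball_in X d (fst p x) (fst p y) \<inter> U = bU U d (fst p x) (snd p r)"
    unfolding ball_in_def bU_def using UX P(5)[OF xX] r1 by auto
  also have "\<dots> = bU U d (fst p c) (snd p r)"
  proof -
    have "d (fst p c) (fst p x) = snd p (d c x)" using P(5) c xX by simp
    also have "\<dots> < snd p r" using doa_strict[OF P(3), of "d c x" r] r2 d_nonneg c xX r by simp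
    finally show ?thesis using bU_eq[OF P(6)[OF xX(1)] P(6)[OF c], of "snd p r" "snd p r"] doa_pos[OF P(3) r]
      d_sym P(6) c xX by simp
  qed
  finally show ?thesis using Bb e unfolding beta_bar_def by simp
qed

lemma beta_off: "B \<notin> balls U d \<Longrightarrow> fst (beta_bar U X d p) B = B"
  unfolding beta_bar_def by simp

lemma beta_snd: "snd (beta_bar U X d p) = snd p"
  unfolding beta_bar_def by simp

lemma beta_ball_aut:
  assumes p: "dc_aut X d p"
  shows "ball_aut U d (beta_bar U X d p)"
proof -
  note P = dc_autD[OF p]
  let ?F = "fst (beta_bar U X d p)"
  have img: "?F B \<in> balls U d" if hB: "B \<in> balls U d" for B
  proof -
    obtain c r where cr: "c \<in> U" "0 < r" "B = bU U d c r" using balls_bU[OF hB] by blast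
    have cX: "c \<in> X" using cr UX by auto
    show ?thesis using cr beta_bU[OF p cX cr(2)] bU_in_balls[OF P(6)[OF cX] doa_pos[OF P(3) cr(2)]] by simp
  qed
  have inj: "inj_on ?F (balls U d)"
  proof (rule inj_onI)
    fix B1 B2 assume B: "B1 \<in> balls U d" "B2 \<in> balls U d" and eq: "?F B1 = ?F B2"
    obtain c1 r1 where c1: "c1 \<in> U" "0 < r1" "B1 = bU U d c1 r1" using balls_bU[OF B(1)] by blast
    obtain c2 r2 where c2: "c2 \<in> U" "0 < r2" "B2 = bU U d c2 r2" using balls_bU[OF B(2)] by blast
    have cX: "c1 \<in> X" "c2 \<in> X" using c1 c2 UX by auto
    have "bU U d (fst p c1) (snd p r1) = bU U d (fst p c2) (snd p r2)"
      using eq beta_bU[OF p cX(1) c1(2)] beta_bU[OF p cX(2) c2(2)] c1 c2 by simp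
    then have "snd p r1 = snd p r2 \<and> d (fst p c1) (fst p c2) < snd p r1"
      using bU_eq[OF P(6)[OF cX(1)] P(6)[OF cX(2)] doa_pos[OF P(3) c1(2)] doa_pos[OF P(3) c2(2)]] by simp
    then have "r1 = r2 \<and> d c1 c2 < r1"
      using doa_inj[OF P(3)] doa_strict[OF P(3), of "d c1 c2" r1] P(5) cX d_nonneg c1 c2 by auto
    then show "B1 = B2" using bU_eq[OF cX c1(2) c2(2)] c1 c2 by simp
  qed
  have sur: "balls U d \<subseteq> ?F ` balls U d"
  proof
    fix B assume B: "B \<in> balls U d"
    obtain c r where cr: "c \<in> U" "0 < r" "B = bU U d c r" using balls_bU[OF B] by blast
    obtain c' where c': "c' \<in> X" "fst p c' = c" using P(1) cr(1) UX unfolding bij_betw_def by (metis imageE subsetD)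
    obtain s where s: "0 \<le> s" "snd p s = r" using doa_surj[OF P(3), of r] cr(2) by auto
    have s0: "0 < s" using s cr(2) P(4) by (cases "s = 0") auto
    show "B \<in> ?F ` balls U d"
      using beta_bU[OF p c'(1) s0] bU_in_balls[OF c'(1) s0] c' s cr by force
  qed
  have bij: "bij_betw ?F (balls U d) (balls U d)"
    unfolding bij_betw_def using inj img sur by blast
  show ?thesis unfolding ball_aut_def beta_snd
  proof (intro conjI allI impI ballI bij P(3))
    fix B assume "B \<notin> balls U d" then show "?F B = B" by (rule beta_off)
  next
    fix B B' assume B: "B \<in> balls U d" "B' \<in> balls U d"
    obtain c r where c: "c \<in> U" "0 < r" "B = bU U d c r" using balls_bU[OF B(1)] by blast
    obtain c' r' where c': "c' \<in> U" "0 < r'" "B' = bU U d c' r'" using balls_bU[OF B(2)] by blast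
    have cX: "c \<in> X" "c' \<in> X" using c c' UX by auto
    have F1: "?F B = bU U d (fst p c) (snd p r)" using beta_bU[OF p cX(1) c(2)] c by simp
    have F2: "?F B' = bU U d (fst p c') (snd p r')" using beta_bU[OF p cX(2) c'(2)] c' by simp
    have pr: "0 < snd p r" "0 < snd p r'" using doa_pos[OF P(3)] c c' by auto
    have dd: "d (fst p c) (fst p c') = snd p (d c c')" using P(5) cX by simp
    have dn: "0 \<le> d c c'" using d_nonneg cX by simp
    show "B \<subseteq> B' \<longleftrightarrow> ?F B \<subseteq> ?F B'"
      unfolding F1 F2 unfolding c(3) c'(3) bU_sub[OF cX c(2) c'(2)] bU_sub[OF P(6)[OF cX(1)] P(6)[OF cX(2)] pr] dd
      using doa_mono[OF P(3), of r r'] doa_strict[OF P(3), of "d c c'" r'] c c' dn by simp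
    show "ball_adj U d B B' \<longleftrightarrow> ball_adj U d (?F B) (?F B')"
      unfolding F1 F2 unfolding c(3) c'(3) adj_bU[OF cX c(2) c'(2)] adj_bU[OF P(6)[OF cX(1)] P(6)[OF cX(2)] pr] dd
      using doa_inj[OF P(3), of r r'] doa_inj[OF P(3), of "d c c'" r] c c' dn by auto
  next
    fix B assume B: "B \<in> balls U d"
    obtain c r where c: "c \<in> U" "0 < r" "B = bU U d c r" using balls_bU[OF B] by blast
    have cX: "c \<in> X" using c UX by auto
    show "ball_level U d (?F B) = snd p (ball_level U d B)"
      using beta_bU[OF p cX c(2)] c level_bU[OF cX c(2)] level_bU[OF P(6)[OF cX] doa_pos[OF P(3) c(2)]] by simp
  qed
qed

lemma beta_mult:
  assumes p: "dc_aut X d p" and q: "dc_aut X d q"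
  shows "beta_bar U X d (fst p \<circ> fst q, snd p \<circ> snd q) =
         (fst (beta_bar U X d p) \<circ> fst (beta_bar U X d q), snd (beta_bar U X d p) \<circ> snd (beta_bar U X d q))"
proof -
  have pq: "dc_aut X d (fst p \<circ> fst q, snd p \<circ> snd q)" using dc_comp[OF p q] .
  note Q = dc_autD[OF q]
  have "fst (beta_bar U X d (fst p \<circ> fst q, snd p \<circ> snd q)) B = fst (beta_bar U X d p) (fst (beta_bar U X d q) B)" for B
  proof (cases "B \<in> balls U d")
    case True
    obtain c r where c: "c \<in> U" "0 < r" "B = bU U d c r" using balls_bU[OF True] by blast
    have cX: "c \<in> X" using c UX by auto
    show ?thesis using beta_bU[OF pq cX c(2)] beta_bU[OF q cX c(2)] beta_bU[OF p Q(6)[OF cX] doa_pos[OF Q(3) c(2)]] c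
      by simp
  next
    case False then show ?thesis by (simp add: beta_off)
  qed
  then show ?thesis by (simp add: beta_snd fun_eq_iff prod_eq_iff)
qed

lemma beta_inj:
  assumes p: "dc_aut X d p" and q: "dc_aut X d q" and eq: "beta_bar U X d p = beta_bar U X d q"
  shows "p = q"
proof -
  note P = dc_autD[OF p] and Q = dc_autD[OF q]
  have sn: "snd p = snd q" using eq beta_snd by metis
  have "fst p x = fst q x" for x
  proof (cases "x \<in> X")
    case False then show ?thesis using P(2) Q(2) by simp
  next
    case True
    have "d (fst p x) (fst q x) < t \<longleftrightarrow> 0 < t" if t: "0 < t" for t
    proof -
      obtain s where s: "0 \<le> s" "snd p s = t" using doa_surj[OF P(3), of t] t by auto
      have s0: "0 < s" using s t P(4) by (cases "s = 0") auto
      have "bU U d (fst p x) t = bU U d (fst q x) t"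
        using beta_bU[OF p True s0] beta_bU[OF q True s0] eq sn s by simp
      then show ?thesis using bU_eq[OF P(6)[OF True] Q(6)[OF True] t t] t by simp
    qed
    then have "d (fst p x) (fst q x) = 0"
      using eq_from_lt[of "d (fst p x) (fst q x)" 0] d_nonneg P(6) Q(6) True by simp
    then show ?thesis using d_zero P(6) Q(6) True by simp
  qed
  then show ?thesis using sn by (simp add: prod_eq_iff fun_eq_iff)
qed

end

section \<open>Surjectivity\<close>

context UU
begin

lemma point_unique:
  assumes q: "ball_aut U d q" and z: "z \<in> X" "z' \<in> X"
    and eq: "\<And>r. 0 < r \<Longrightarrow> bU U d z (snd q r) = bU U d z' (snd q r)"
  shows "z = z'"
proof -
  note Q = ball_autD[OF q]
  have "d z z' < t \<longleftrightarrow> 0 < t" if t: "0 < t" for t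
  proof -
    obtain s where s: "0 \<le> s" "snd q s = t" using doa_surj[OF Q(5), of t] t by auto
    have s0: "0 < s" using s t doa_zero[OF Q(5)] by (cases "s = 0") auto
    show ?thesis using eq[OF s0] s bU_eq[OF z t t] t by simp
  qed
  then have "d z z' = 0" using eq_from_lt[of "d z z'" 0] d_nonneg z by simp
  then show ?thesis using d_zero z by simp
qed

lemma point_exists:
  assumes q: "ball_aut U d q" and x: "x \<in> X"
  shows "\<exists>z\<in>X. \<forall>r>0. fst q (bU U d x r) = bU U d z (snd q r)"
proof -
  note Q = ball_autD[OF q]
  let ?g = "fst q" and ?l = "snd q"
  have cc: "\<forall>r. \<exists>c. 0 < r \<longrightarrow> c \<in> U \<and> ?g (bU U d x r) = bU U d c (?l r)"
  proof (intro allI)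
    fix r :: rat
    show "\<exists>c. 0 < r \<longrightarrow> c \<in> U \<and> ?g (bU U d x r) = bU U d c (?l r)"
    proof (cases "0 < r")
      case True
      have Bb: "bU U d x r \<in> balls U d" using bU_in_balls[OF x True] .
      obtain c r' where c: "c \<in> U" "0 < r'" "?g (bU U d x r) = bU U d c r'"
        using balls_bU[OF Q(7)[OF Bb]] by blast
      have cX: "c \<in> X" using c UX by auto
      have "?l r = r'" using Q(6)[OF Bb] c level_bU[OF x True] level_bU[OF cX c(2)] by simp
      then show ?thesis using c by auto
    qed simp
  qed
  obtain cf where cf: "\<And>r. 0 < r \<Longrightarrow> cf r \<in> U \<and> ?g (bU U d x r) = bU U d (cf r) (?l r)"
    using choice[OF cc] by blast
  have cfX: "0 < r \<Longrightarrow> cf r \<in> X" for r using cf UX by auto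
  have nest: "d (cf r) (cf r') < ?l r'" if r: "0 < r" "r \<le> r'" for r r'
  proof -
    have r': "0 < r'" using r by simp
    have "bU U d x r \<subseteq> bU U d x r'" using bU_sub[OF x x r(1) r'] r x by simp
    then have "?g (bU U d x r) \<subseteq> ?g (bU U d x r')"
      using Q(3)[OF bU_in_balls[OF x r(1)] bU_in_balls[OF x r']] by simp
    then have "bU U d (cf r) (?l r) \<subseteq> bU U d (cf r') (?l r')" using cf r r' by simp
    then show ?thesis using bU_sub[OF cfX[OF r(1)] cfX[OF r'] doa_pos[OF Q(5) r(1)] doa_pos[OF Q(5) r']] by simp
  qed
  define rn where "rn n = invD ?l (1 / (of_nat n + 1))" for n :: nat
  have IL: "dist_order_aut (invD ?l)" "\<And>t. ?l (invD ?l t) = t" using invD_props[OF Q(5)] by auto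
  have rn_pos: "0 < rn n" for n unfolding rn_def by (rule doa_pos[OF IL(1)]) simp
  have l_rn: "?l (rn n) = 1 / (of_nat n + 1)" for n unfolding rn_def using IL(2) by simp
  have rn_mono: "rn n \<le> rn m" if "m \<le> n" for m n
    using doa_mono[OF Q(5), of "rn n" "rn m"] rn_pos l_rn rat_frac_mono[OF that] by (simp add: less_imp_le)
  define sq where "sq n = cf (rn n)" for n
  have sqX: "sq n \<in> X" for n unfolding sq_def using cfX rn_pos by simp
  have sq_close: "d (sq n) (sq m) < 1 / (of_nat m + 1)" if "m \<le> n" for m n
    unfolding sq_def using nest[OF rn_pos rn_mono[OF that]] l_rn by simp
  have cauchy: "rat_cauchy X d sq"
    unfolding rat_cauchy_def
  proof (intro conjI allI impI sqX)
    fix e :: rat assume e: "0 < e"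
    obtain N where N: "1 / (of_nat N + 1) < e" using rat_arch[OF e] by blast
    show "\<exists>N. \<forall>m\<ge>N. \<forall>n\<ge>N. d (sq m) (sq n) < e"
    proof (intro exI allI impI)
      fix m n assume mn: "N \<le> m" "N \<le> n"
      show "d (sq m) (sq n) < e"
      proof (cases "m \<le> n")
        case True
        have "d (sq n) (sq m) < e" using sq_close[OF True] rat_frac_mono[OF mn(1)] N by simp
        then show ?thesis using d_sym sqX by simp
      next
        case False
        then show ?thesis using sq_close[of n m] rat_frac_mono[OF mn(2)] N by simp
      qed
    qed
  qed
  obtain z where z: "rat_converges X d sq z" using complete[OF cauchy] by blast
  have zX: "z \<in> X" using z unfolding rat_converges_def by simp
  have "\<forall>r>0. ?g (bU U d x r) = bU U d z (?l r)"
  proof (intro allI impI)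
    fix r :: rat assume r: "0 < r"
    have lr: "0 < ?l r" using doa_pos[OF Q(5) r] .
    obtain N1 where N1: "\<forall>n\<ge>N1. d (sq n) z < ?l r" using z lr unfolding rat_converges_def by blast
    obtain N2 where N2: "1 / (of_nat N2 + 1) < ?l r" using rat_arch[OF lr] by blast
    let ?n = "max N1 N2"
    have a: "d (sq ?n) z < ?l r" using N1 by simp
    have "?l (rn ?n) \<le> ?l r" using l_rn[of ?n] rat_frac_mono[of N2 ?n] N2 by simp
    then have "rn ?n \<le> r" using doa_mono[OF Q(5), of "rn ?n" r] rn_pos r by (simp add: less_imp_le)
    then have b: "d (sq ?n) (cf r) < ?l r" unfolding sq_def using nest[OF rn_pos] by simp
    have "d (cf r) z < ?l r" using ultra_lt[of "cf r" "sq ?n" z "?l r"] a b d_sym sqX cfX[OF r] zX by simp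
    then have "bU U d (cf r) (?l r) = bU U d z (?l r)" using bU_eq[OF cfX[OF r] zX lr lr] by simp
    then show "?g (bU U d x r) = bU U d z (?l r)" using cf[OF r] by simp
  qed
  then show ?thesis using zX by blast
qed

definition fB :: "('a set \<Rightarrow> 'a set) \<times> (rat \<Rightarrow> rat) \<Rightarrow> 'a \<Rightarrow> 'a" where
  "fB q x = (if x \<in> X then SOME z. z \<in> X \<and> (\<forall>r>0. fst q (bU U d x r) = bU U d z (snd q r)) else x)"

lemma fB_prop:
  assumes q: "ball_aut U d q" and x: "x \<in> X"
  shows "fB q x \<in> X" "\<And>r. 0 < r \<Longrightarrow> fst q (bU U d x r) = bU U d (fB q x) (snd q r)"
proof -
  have ex: "\<exists>z. z \<in> X \<and> (\<forall>r>0. fst q (bU U d x r) = bU U d z (snd q r))" using point_exists[OF q x] by blast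
  have e: "fB q x = (SOME z. z \<in> X \<and> (\<forall>r>0. fst q (bU U d x r) = bU U d z (snd q r)))"
    using x by (simp add: fB_def)
  have "fB q x \<in> X \<and> (\<forall>r>0. fst q (bU U d x r) = bU U d (fB q x) (snd q r))"
    unfolding e by (rule someI_ex[OF ex])
  then show "fB q x \<in> X" "\<And>r. 0 < r \<Longrightarrow> fst q (bU U d x r) = bU U d (fB q x) (snd q r)" by auto
qed

lemma fB_unique:
  assumes q: "ball_aut U d q" and x: "x \<in> X" and z: "z \<in> X"
    and h: "\<And>r. 0 < r \<Longrightarrow> fst q (bU U d x r) = bU U d z (snd q r)"
  shows "fB q x = z"
  using point_unique[OF q fB_prop(1)[OF q x] z] fB_prop(2)[OF q x] h by metis

lemma fB_dist:
  assumes q: "ball_aut U d q" and x: "x \<in> X" and y: "y \<in> X"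
  shows "d (fB q x) (fB q y) = snd q (d x y)"
proof (rule eq_from_lt)
  note Q = ball_autD[OF q]
  note fx = fB_prop[OF q x] and fy = fB_prop[OF q y]
  show "0 \<le> d (fB q x) (fB q y)" using d_nonneg fx fy by simp
  show "0 \<le> snd q (d x y)" using doa_nonneg[OF Q(5)] d_nonneg x y by simp
  fix t :: rat assume t: "0 < t"
  have IL: "dist_order_aut (invD (snd q))" "\<And>t. snd q (invD (snd q) t) = t" using invD_props[OF Q(5)] by auto
  define s where "s = invD (snd q) t"
  have s0: "0 < s" unfolding s_def using doa_pos[OF IL(1) t] .
  have ls: "snd q s = t" unfolding s_def using IL(2) by simp
  have "d (fB q x) (fB q y) < t \<longleftrightarrow> bU U d (fB q x) t = bU U d (fB q y) t"
    using bU_eq[OF fx(1) fy(1) t t] by simp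
  also have "\<dots> \<longleftrightarrow> fst q (bU U d x s) = fst q (bU U d y s)" using fx(2)[OF s0] fy(2)[OF s0] ls by simp
  also have "\<dots> \<longleftrightarrow> bU U d x s = bU U d y s"
    by (rule inj_on_eq_iff[OF bij_betw_imp_inj_on[OF Q(1)] bU_in_balls[OF x s0] bU_in_balls[OF y s0]])
  also have "\<dots> \<longleftrightarrow> d x y < s" using bU_eq[OF x y s0 s0] by simp
  also have "\<dots> \<longleftrightarrow> snd q (d x y) < t" using doa_strict[OF Q(5), of "d x y" s] d_nonneg x y s0 ls by simp
  finally show "d (fB q x) (fB q y) < t \<longleftrightarrow> snd q (d x y) < t" .
qed

definition preB :: "('a set \<Rightarrow> 'a set) \<times> (rat \<Rightarrow> rat) \<Rightarrow> ('a \<Rightarrow> 'a) \<times> (rat \<Rightarrow> rat)" where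
  "preB q = (fB q, snd q)"

lemma preB_dc:
  assumes q: "ball_aut U d q"
  shows "dc_aut X d (preB q)"
proof -
  note Q = ball_autD[OF q]
  have inj: "inj_on (fB q) X"
  proof (rule inj_onI)
    fix x y assume xy: "x \<in> X" "y \<in> X" "fB q x = fB q y"
    have "snd q (d x y) = snd q 0" using fB_dist[OF q xy(1,2)] xy fB_prop(1)[OF q] doa_zero[OF Q(5)] by simp
    then have "d x y = 0" using doa_inj[OF Q(5)] d_nonneg xy by simp
    then show "x = y" using d_zero xy by simp
  qed
  have sur: "X \<subseteq> fB q ` X"
  proof
    fix z assume z: "z \<in> X"
    have q': "ball_aut U d (invB U d q)" using invB_ball_aut[OF q] .
    let ?w = "fB (invB U d q) z"
    have w: "?w \<in> X" using fB_prop(1)[OF q' z] .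
    have IL: "\<And>t. invD (snd q) (snd q t) = t" using invD_props[OF Q(5)] by auto
    have "fB q ?w = z"
    proof (rule fB_unique[OF q w z])
      fix r :: rat assume r: "0 < r"
      have t: "0 < snd q r" using doa_pos[OF Q(5) r] .
      have Bz: "bU U d z (snd q r) \<in> balls U d" using bU_in_balls[OF z t] .
      have "fst (invB U d q) (bU U d z (snd q r)) = bU U d ?w (snd (invB U d q) (snd q r))"
        using fB_prop(2)[OF q' z t] .
      then have "inv_into (balls U d) (fst q) (bU U d z (snd q r)) = bU U d ?w r"
        using Bz IL by (simp add: invB_def)
      then show "fst q (bU U d ?w r) = bU U d z (snd q r)"
        using Q(1) Bz by (metis bij_betw_inv_into_right)
    qed
    then show "z \<in> fB q ` X" using w by force
  qed
  have bij: "bij_betw (fB q) X X"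
    unfolding bij_betw_def using inj sur fB_prop(1)[OF q] by blast
  show ?thesis unfolding dc_aut_def preB_def fst_conv snd_conv
    using bij Q(5) doa_zero[OF Q(5)] fB_dist[OF q] by (simp add: fB_def)
qed

lemma beta_preB:
  assumes q: "ball_aut U d q"
  shows "beta_bar U X d (preB q) = q"
proof -
  note Q = ball_autD[OF q]
  have "fst (beta_bar U X d (preB q)) B = fst q B" for B
  proof (cases "B \<in> balls U d")
    case True
    obtain c r where c: "c \<in> U" "0 < r" "B = bU U d c r" using balls_bU[OF True] by blast
    have cX: "c \<in> X" using c UX by auto
    show ?thesis using beta_bU[OF preB_dc[OF q] cX c(2)] fB_prop(2)[OF q cX c(2)] c by (simp add: preB_def)
  next
    case False then show ?thesis using beta_off Q(2) by simp
  qed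
  then show ?thesis by (simp add: prod_eq_iff fun_eq_iff beta_snd preB_def)
qed

end

section \<open>Isomorphism and topology\<close>

lemma openB_fst: "B \<in> balls S d \<Longrightarrow> openin (AutB_topology S d) {p \<in> carrier (AutB S d). fst p B = C}"
  unfolding AutB_topology_def by (rule topology_generated_by_Basis) blast

lemma openB_snd: "0 \<le> q \<Longrightarrow> openin (AutB_topology S d) {p \<in> carrier (AutB S d). snd p q = s}"
  unfolding AutB_topology_def by (rule topology_generated_by_Basis) blast

lemma topspace_AutB: "topspace (AutB_topology S d) = carrier (AutB S d)"
  unfolding AutB_topology_def topology_generated_by_topspace by blast

lemma AutB_carrier_ball_aut: "p \<in> carrier (AutB S d) \<longleftrightarrow> ball_aut S d p"
  by (simp add: AutB_def)

lemma AutM_carrier_dc: "p \<in> carrier (AutM X d) \<longleftrightarrow> dc_aut X d p"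
  by (simp add: AutM_def)

lemma topspace_AutM: "topspace (AutM_topology X d) = carrier (AutM X d)"
proof -
  have "carrier (AutM X d) = AutM_nbhd X d {} 1 (id, id)" by (simp add: AutM_nbhd_def)
  moreover have "(id, id) \<in> carrier (AutM X d)" by (simp add: AutM_def dc_id)
  ultimately have "carrier (AutM X d) \<in> {AutM_nbhd X d A r p | A r p. finite A \<and> A \<subseteq> X \<and> r > 0 \<and> p \<in> carrier (AutM X d)}"
    by force
  moreover have "\<And>N. N \<in> {AutM_nbhd X d A r p | A r p. finite A \<and> A \<subseteq> X \<and> r > 0 \<and> p \<in> carrier (AutM X d)} \<Longrightarrow> N \<subseteq> carrier (AutM X d)"
    by (auto simp: AutM_nbhd_def)
  ultimately show ?thesis unfolding AutM_topology_def topology_generated_by_topspace by blast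
qed

lemma openM_nbhd: "finite A \<Longrightarrow> A \<subseteq> X \<Longrightarrow> 0 < r \<Longrightarrow> p \<in> carrier (AutM X d) \<Longrightarrow> openin (AutM_topology X d) (AutM_nbhd X d A r p)"
  unfolding AutM_topology_def by (rule topology_generated_by_Basis) blast

context UU
begin

lemma nbhd_self: "p \<in> carrier (AutM X d) \<Longrightarrow> A \<subseteq> X \<Longrightarrow> 0 < r \<Longrightarrow> p \<in> AutM_nbhd X d A r p"
proof -
  assume a: "p \<in> carrier (AutM X d)" "A \<subseteq> X" "0 < r"
  then have "dc_aut X d p" by (simp add: AutM_def)
  then have "\<forall>x\<in>A. d (fst p x) (fst p x) < r" using a dc_autD(6) d_refl by (metis subsetD)
  then show ?thesis using a unfolding AutM_nbhd_def by simp
qed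

lemma nbhd_ultra:
  assumes "p1 \<in> AutM_nbhd X d A r p" "A \<subseteq> X" "p \<in> carrier (AutM X d)"
  shows "AutM_nbhd X d A r p1 \<subseteq> AutM_nbhd X d A r p"
proof
  fix q assume q: "q \<in> AutM_nbhd X d A r p1"
  have p1: "dc_aut X d p1" and p: "dc_aut X d p" and qq: "dc_aut X d q"
    using assms q by (auto simp: AutM_nbhd_def AutM_def)
  show "q \<in> AutM_nbhd X d A r p"
    unfolding AutM_nbhd_def
  proof (intro CollectI conjI ballI)
    show "q \<in> carrier (AutM X d)" using qq by (simp add: AutM_def)
    fix x assume x: "x \<in> A"
    then have xX: "x \<in> X" using assms by auto
    have a: "d (fst q x) (fst p1 x) < r" using q x by (auto simp: AutM_nbhd_def)
    have b: "d (fst p1 x) (fst p x) < r" using assms(1) x by (auto simp: AutM_nbhd_def)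
    show "d (fst q x) (fst p x) < r"
      using ultra_lt[OF dc_autD(6)[OF qq xX] dc_autD(6)[OF p1 xX] dc_autD(6)[OF p xX] a b] .
  qed
qed

lemma nbhd_mono: "A \<subseteq> A' \<Longrightarrow> r' \<le> r \<Longrightarrow> AutM_nbhd X d A' r' p \<subseteq> AutM_nbhd X d A r p"
  unfolding AutM_nbhd_def by fastforce

lemma open_nbhd_base:
  assumes "openin (AutM_topology X d) V"
  shows "\<forall>p\<in>V. \<exists>A r. finite A \<and> A \<subseteq> X \<and> 0 < r \<and> AutM_nbhd X d A r p \<subseteq> V"
proof -
  have "generate_topology_on {AutM_nbhd X d A r p | A r p. finite A \<and> A \<subseteq> X \<and> r > 0 \<and> p \<in> carrier (AutM X d)} V"
    using assms by (simp add: AutM_topology_def openin_topology_generated_by_iff)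
  then show ?thesis
  proof (induction rule: generate_topology_on.induct)
    case Empty then show ?case by simp
  next
    case (Int a b)
    show ?case
    proof
      fix p assume "p \<in> a \<inter> b"
      then have pa: "p \<in> a" and pb: "p \<in> b" by auto
      obtain A1 r1 where 1: "finite A1" "A1 \<subseteq> X" "0 < r1" "AutM_nbhd X d A1 r1 p \<subseteq> a"
        using bspec[OF Int.IH(1) pa] by blast
      obtain A2 r2 where 2: "finite A2" "A2 \<subseteq> X" "0 < r2" "AutM_nbhd X d A2 r2 p \<subseteq> b"
        using bspec[OF Int.IH(2) pb] by blast
      have "AutM_nbhd X d (A1 \<union> A2) (min r1 r2) p \<subseteq> a"
        using nbhd_mono[of A1 "A1 \<union> A2" "min r1 r2" r1 p] 1 by auto
      moreover have "AutM_nbhd X d (A1 \<union> A2) (min r1 r2) p \<subseteq> b"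
        using nbhd_mono[of A2 "A1 \<union> A2" "min r1 r2" r2 p] 2 by auto
      ultimately have "AutM_nbhd X d (A1 \<union> A2) (min r1 r2) p \<subseteq> a \<inter> b" by blast
      moreover have "finite (A1 \<union> A2)" "A1 \<union> A2 \<subseteq> X" "0 < min r1 r2" using 1 2 by auto
      ultimately show "\<exists>A r. finite A \<and> A \<subseteq> X \<and> 0 < r \<and> AutM_nbhd X d A r p \<subseteq> a \<inter> b" by blast
    qed
  next
    case (UN K)
    show ?case
    proof
      fix p assume "p \<in> \<Union>K"
      then obtain k where k: "k \<in> K" "p \<in> k" by blast
      obtain A r where Ar: "finite A" "A \<subseteq> X" "0 < r" "AutM_nbhd X d A r p \<subseteq> k"
        using bspec[OF UN.IH[OF k(1)] k(2)] by blast
      have "k \<subseteq> \<Union>K" using k(1) by (rule Union_upper)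
      then have "AutM_nbhd X d A r p \<subseteq> \<Union>K" using Ar(4) by (rule order_trans[rotated])
      then show "\<exists>A r. finite A \<and> A \<subseteq> X \<and> 0 < r \<and> AutM_nbhd X d A r p \<subseteq> \<Union>K" using Ar by blast
    qed
  next
    case (Basis s)
    then obtain A r p1 where s: "s = AutM_nbhd X d A r p1" "finite A" "A \<subseteq> X" "0 < r" "p1 \<in> carrier (AutM X d)"
      by blast
    show ?case
    proof
      fix p assume "p \<in> s"
      then have "AutM_nbhd X d A r p \<subseteq> s" using nbhd_ultra[of p A r p1] s by simp
      then show "\<exists>A r. finite A \<and> A \<subseteq> X \<and> 0 < r \<and> AutM_nbhd X d A r p \<subseteq> s" using s by blast
    qed
  qed
qed

lemma nbhd_level:
  assumes p0: "dc_aut X d p0" and p: "p \<in> AutM_nbhd X d {c, y} (snd p0 t) p0"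
    and c: "c \<in> X" "y \<in> X" and t: "d c y = t" "0 < t"
  shows "snd p t = snd p0 t" "d (fst p c) (fst p0 c) < snd p0 t"
proof -
  have pp: "dc_aut X d p" using p by (simp add: AutM_nbhd_def AutM_def)
  note P = dc_autD[OF pp] and P0 = dc_autD[OF p0]
  have a: "d (fst p c) (fst p0 c) < snd p0 t" and b: "d (fst p y) (fst p0 y) < snd p0 t"
    using p by (auto simp: AutM_nbhd_def)
  then show "d (fst p c) (fst p0 c) < snd p0 t" by simp
  have e1: "d (fst p c) (fst p y) = snd p t" using P(5) c t by simp
  have e0: "d (fst p0 c) (fst p0 y) = snd p0 t" using P0(5) c t by simp
  have "d (fst p c) (fst p y) \<le> snd p0 t"
  proof -
    have "d (fst p c) (fst p0 y) \<le> snd p0 t"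
      using ultra_le[of "fst p c" "fst p0 c" "fst p0 y" "snd p0 t"] a e0 P(6) P0(6) c by simp
    then show ?thesis using ultra_le[of "fst p c" "fst p0 y" "fst p y" "snd p0 t"] b d_sym P(6) P0(6) c by simp
  qed
  moreover have "\<not> d (fst p c) (fst p y) < snd p0 t"
  proof
    assume h: "d (fst p c) (fst p y) < snd p0 t"
    have "d (fst p0 c) (fst p y) < snd p0 t"
      using ultra_lt[of "fst p0 c" "fst p c" "fst p y" "snd p0 t"] a h d_sym P(6) P0(6) c by simp
    then have "d (fst p0 c) (fst p0 y) < snd p0 t"
      using ultra_lt[of "fst p0 c" "fst p y" "fst p0 y" "snd p0 t"] b P(6) P0(6) c by simp
    then show False using e0 by simp
  qed
  ultimately show "snd p t = snd p0 t" using e1 by simp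
qed

lemma beta_hom: "beta_bar U X d \<in> hom (AutM X d) (AutB U d)"
  unfolding hom_def using beta_ball_aut beta_mult by (auto simp: AutM_def AutB_def)

lemma beta_bij: "bij_betw (beta_bar U X d) (carrier (AutM X d)) (carrier (AutB U d))"
  unfolding bij_betw_def
proof
  show "inj_on (beta_bar U X d) (carrier (AutM X d))"
    using beta_inj by (auto intro!: inj_onI simp: AutM_def)
  show "beta_bar U X d ` carrier (AutM X d) = carrier (AutB U d)"
  proof
    show "beta_bar U X d ` carrier (AutM X d) \<subseteq> carrier (AutB U d)" using beta_ball_aut by (auto simp: AutM_def AutB_def)
    show "carrier (AutB U d) \<subseteq> beta_bar U X d ` carrier (AutM X d)"
    proof
      fix q assume "q \<in> carrier (AutB U d)"
      then have q: "ball_aut U d q" by (simp add: AutB_def)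
      have "preB q \<in> carrier (AutM X d)" using preB_dc[OF q] by (simp add: AutM_def)
      then show "q \<in> beta_bar U X d ` carrier (AutM X d)" using beta_preB[OF q] by force
    qed
  qed
qed

lemma beta_iso: "beta_bar U X d \<in> iso (AutM X d) (AutB U d)"
  unfolding iso_def using beta_hom beta_bij by blast

lemma beta_continuous: "continuous_map (AutM_topology X d) (AutB_topology U d) (beta_bar U X d)"
  unfolding AutB_topology_def
proof (rule continuous_map_generated_by)
  fix p assume "p \<in> topspace (AutM_topology X d)"
  then have "beta_bar U X d p \<in> carrier (AutB U d)" using beta_ball_aut[of p] by (simp add: topspace_AutM AutM_def AutB_def)
  then show "beta_bar U X d p \<in> \<Union>({carrier (AutB U d)} \<union> {{p \<in> carrier (AutB U d). fst p B = C} |B C. B \<in> balls U d} \<union>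
         {{p \<in> carrier (AutB U d). snd p q = s} |q s. 0 \<le> q})" by blast
next
  have inB: "p \<in> carrier (AutM X d) \<Longrightarrow> beta_bar U X d p \<in> carrier (AutB U d)" for p
    using beta_ball_aut[of p] by (simp add: AutM_def AutB_def)
  fix S assume "S \<in> {carrier (AutB U d)} \<union> {{p \<in> carrier (AutB U d). fst p B = C} |B C. B \<in> balls U d} \<union>
         {{p \<in> carrier (AutB U d). snd p q = s} |q s. 0 \<le> q}"
  then consider "S = carrier (AutB U d)"
    | B C where "B \<in> balls U d" "S = {p \<in> carrier (AutB U d). fst p B = C}"
    | q s where "0 \<le> q" "S = {p \<in> carrier (AutB U d). snd p q = s}" by blast
  then show "openin (AutM_topology X d) {x \<in> topspace (AutM_topology X d). beta_bar U X d x \<in> S}"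
  proof cases
    case 1
    then have "{x \<in> topspace (AutM_topology X d). beta_bar U X d x \<in> S} = topspace (AutM_topology X d)"
      using inB topspace_AutM[of X d] by auto
    then show ?thesis by simp
  next
    case (2 B C)
    show ?thesis
    proof (subst openin_subopen, intro ballI)
      fix p0 assume "p0 \<in> {x \<in> topspace (AutM_topology X d). beta_bar U X d x \<in> S}"
      then have p0: "p0 \<in> carrier (AutM X d)" and e0: "fst (beta_bar U X d p0) B = C" using 2 topspace_AutM[of X d] by auto
      have p0d: "dc_aut X d p0" using p0 by (simp add: AutM_def)
      obtain c r where c: "c \<in> U" "0 < r" "B = bU U d c r" using balls_bU[OF 2(1)] by blast
      obtain y where y: "y \<in> U" "d y c = r" using ext1[OF c(1,2)] by blast
      have cX: "c \<in> X" "y \<in> X" using c y UX by auto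
      have dcy: "d c y = r" using y d_sym cX by simp
      let ?N = "AutM_nbhd X d {c, y} (snd p0 r) p0"
      have pos: "0 < snd p0 r" using doa_pos[OF dc_autD(3)[OF p0d] c(2)] .
      have "openin (AutM_topology X d) ?N" using openM_nbhd[where A="{c, y}" and r="snd p0 r" and p=p0 and X=X and d=d] cX pos p0 by simp
      moreover have "p0 \<in> ?N" using nbhd_self[OF p0, of "{c, y}" "snd p0 r"] cX pos by simp
      moreover have "?N \<subseteq> {x \<in> topspace (AutM_topology X d). beta_bar U X d x \<in> S}"
      proof
        fix p assume pN: "p \<in> ?N"
        have pc: "p \<in> carrier (AutM X d)" using pN by (simp add: AutM_nbhd_def)
        have pd: "dc_aut X d p" using pc by (simp add: AutM_def)
        have l: "snd p r = snd p0 r" "d (fst p c) (fst p0 c) < snd p0 r"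
          using nbhd_level[OF p0d pN cX dcy c(2)] by auto
        have "fst (beta_bar U X d p) B = bU U d (fst p c) (snd p r)" using beta_bU[OF pd cX(1) c(2)] c by simp
        also have "\<dots> = bU U d (fst p0 c) (snd p0 r)"
          using bU_eq[OF dc_autD(6)[OF pd cX(1)] dc_autD(6)[OF p0d cX(1)], of "snd p r" "snd p0 r"] l pos by simp
        also have "\<dots> = C" using beta_bU[OF p0d cX(1) c(2)] c e0 by simp
        finally show "p \<in> {x \<in> topspace (AutM_topology X d). beta_bar U X d x \<in> S}"
          using 2 pc inB topspace_AutM[of X d] by auto
      qed
      ultimately show "\<exists>T. openin (AutM_topology X d) T \<and> p0 \<in> T \<and> T \<subseteq> {x \<in> topspace (AutM_topology X d). beta_bar U X d x \<in> S}"
        by blast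
    qed
  next
    case (3 t s)
    show ?thesis
    proof (subst openin_subopen, intro ballI)
      fix p0 assume "p0 \<in> {x \<in> topspace (AutM_topology X d). beta_bar U X d x \<in> S}"
      then have p0: "p0 \<in> carrier (AutM X d)" and e0: "snd p0 t = s" using 3 topspace_AutM[of X d] beta_snd by auto
      have p0d: "dc_aut X d p0" using p0 by (simp add: AutM_def)
      show "\<exists>T. openin (AutM_topology X d) T \<and> p0 \<in> T \<and> T \<subseteq> {x \<in> topspace (AutM_topology X d). beta_bar U X d x \<in> S}"
      proof (cases "t = 0")
        case True
        have "topspace (AutM_topology X d) \<subseteq> {x \<in> topspace (AutM_topology X d). beta_bar U X d x \<in> S}"
        proof
          fix p assume "p \<in> topspace (AutM_topology X d)"
          then have pc: "p \<in> carrier (AutM X d)" using topspace_AutM[of X d] by simp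
          then have "snd p 0 = 0" by (simp add: AutM_def dc_aut_def)
          moreover have "snd p0 0 = 0" using p0d by (simp add: dc_aut_def)
          ultimately show "p \<in> {x \<in> topspace (AutM_topology X d). beta_bar U X d x \<in> S}"
            using 3 True e0 pc inB topspace_AutM[of X d] beta_snd by auto
        qed
        moreover have "openin (AutM_topology X d) (topspace (AutM_topology X d))" by (rule openin_topspace)
        moreover have "p0 \<in> topspace (AutM_topology X d)" using p0 topspace_AutM[of X d] by simp
        ultimately show ?thesis by blast
      next
        case False
        then have t: "0 < t" using 3 by simp
        obtain c where c: "c \<in> U" using U_nonempty by blast
        obtain y where y: "y \<in> U" "d y c = t" using ext1[OF c t] by blast
        have cX: "c \<in> X" "y \<in> X" using c y UX by auto
        have dcy: "d c y = t" using y d_sym cX by simp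
        let ?N = "AutM_nbhd X d {c, y} (snd p0 t) p0"
        have pos: "0 < snd p0 t" using doa_pos[OF dc_autD(3)[OF p0d] t] .
        have "openin (AutM_topology X d) ?N" using openM_nbhd[where A="{c, y}" and r="snd p0 t" and p=p0 and X=X and d=d] cX pos p0 by simp
        moreover have "p0 \<in> ?N" using nbhd_self[OF p0, of "{c, y}" "snd p0 t"] cX pos by simp
        moreover have "?N \<subseteq> {x \<in> topspace (AutM_topology X d). beta_bar U X d x \<in> S}"
        proof
          fix p assume pN: "p \<in> ?N"
          have pc: "p \<in> carrier (AutM X d)" using pN by (simp add: AutM_nbhd_def)
          have "snd p t = snd p0 t" using nbhd_level[OF p0d pN cX dcy t] by auto
          then show "p \<in> {x \<in> topspace (AutM_topology X d). beta_bar U X d x \<in> S}"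
            using 3 e0 pc inB topspace_AutM[of X d] beta_snd by auto
        qed
        ultimately show ?thesis by blast
      qed
    qed
  qed
qed

end

section \<open>Openness\<close>

context UU
begin

lemma beta_nbhd_open:
  assumes p0: "p0 \<in> carrier (AutM X d)" and A: "finite A" "A \<subseteq> X" and r: "0 < r"
  shows "\<exists>W. openin (AutB_topology U d) W \<and> beta_bar U X d p0 \<in> W \<and> W \<subseteq> beta_bar U X d ` AutM_nbhd X d A r p0"
proof -
  have p0d: "dc_aut X d p0" using p0 by (simp add: AutM_def)
  note P0 = dc_autD[OF p0d]
  have IL: "dist_order_aut (invD (snd p0))" "\<And>t. snd p0 (invD (snd p0) t) = t" using invD_props[OF P0(3)] by auto
  define e where "e = invD (snd p0) r"
  have e0: "0 < e" unfolding e_def using doa_pos[OF IL(1) r] .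
  have le: "snd p0 e = r" unfolding e_def using IL(2) by simp
  define u where "u a = (SOME u. u \<in> U \<and> d a u < e \<and> d u a < e)" for a
  have u: "u a \<in> U \<and> d a (u a) < e \<and> d (u a) a < e" if aX: "a \<in> X" for a
  proof -
    obtain v where "v \<in> U" "d a v < e" "d v a < e" using near_point[OF aX e0] by blast
    then have "\<exists>v. v \<in> U \<and> d a v < e \<and> d v a < e" by blast
    then show ?thesis unfolding u_def by (rule someI_ex)
  qed
  have uX: "a \<in> X \<Longrightarrow> u a \<in> X" for a using u UX by auto
  define W0 where "W0 = {q \<in> carrier (AutB U d). snd q e = r}"
  define Wa where "Wa a = {q \<in> carrier (AutB U d). fst q (bU U d (u a) e) = bU U d (fst p0 (u a)) r}" for a
  define W where "W = \<Inter>(insert W0 (Wa ` A))"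
  have "openin (AutB_topology U d) W"
    unfolding W_def
  proof (rule openin_Inter)
    show "finite (insert W0 (Wa ` A))" using A by simp
    show "insert W0 (Wa ` A) \<noteq> {}" by simp
    fix T assume "T \<in> insert W0 (Wa ` A)"
    then consider "T = W0" | a where "a \<in> A" "T = Wa a" by blast
    then show "openin (AutB_topology U d) T"
    proof cases
      case 1 then show ?thesis unfolding W0_def using openB_snd[of e U d r] e0 by simp
    next
      case (2 a)
      have "bU U d (u a) e \<in> balls U d" using bU_in_balls[OF uX e0] 2 A by auto
      then show ?thesis unfolding 2 Wa_def by (rule openB_fst)
    qed
  qed
  moreover have "beta_bar U X d p0 \<in> W"
  proof -
    have bc: "beta_bar U X d p0 \<in> carrier (AutB U d)" using beta_ball_aut[OF p0d] by (simp add: AutB_def)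
    have "beta_bar U X d p0 \<in> W0" unfolding W0_def using bc le beta_snd by simp
    moreover have "beta_bar U X d p0 \<in> Wa a" if "a \<in> A" for a
    proof -
      have aX: "a \<in> X" using that A by auto
      show ?thesis unfolding Wa_def using bc beta_bU[OF p0d uX[OF aX] e0] le by simp
    qed
    ultimately show ?thesis unfolding W_def by blast
  qed
  moreover have "W \<subseteq> beta_bar U X d ` AutM_nbhd X d A r p0"
  proof
    fix q assume qW: "q \<in> W"
    then have qc: "q \<in> carrier (AutB U d)" unfolding W_def W0_def by blast
    have q: "ball_aut U d q" using qc by (simp add: AutB_def)
    define p where "p = preB q"
    have pd: "dc_aut X d p" unfolding p_def using preB_dc[OF q] .
    note P = dc_autD[OF pd]
    have bq: "beta_bar U X d p = q" unfolding p_def using beta_preB[OF q] .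
    have lp: "snd p e = r" using qW bq beta_snd[of p] unfolding W_def W0_def by auto
    have "p \<in> AutM_nbhd X d A r p0"
      unfolding AutM_nbhd_def
    proof (intro CollectI conjI ballI)
      show "p \<in> carrier (AutM X d)" using pd by (simp add: AutM_def)
      fix a assume aA: "a \<in> A"
      have aX: "a \<in> X" using aA A by auto
      have "q \<in> Wa a" using qW aA unfolding W_def by blast
      then have "fst q (bU U d (u a) e) = bU U d (fst p0 (u a)) r" unfolding Wa_def by simp
      moreover have "fst q (bU U d (u a) e) = bU U d (fst p (u a)) r"
        using beta_bU[OF pd uX[OF aX] e0] bq lp by simp
      ultimately have "bU U d (fst p (u a)) r = bU U d (fst p0 (u a)) r" by simp
      then have m: "d (fst p (u a)) (fst p0 (u a)) < r" using bU_eq[OF P(6)[OF uX[OF aX]] P0(6)[OF uX[OF aX]] r r] by simp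
      have "d (fst p a) (fst p (u a)) = snd p (d a (u a))" using P(5) aX uX by simp
      also have "\<dots> < snd p e" using doa_strict[OF P(3), of "d a (u a)" e] u[OF aX] d_nonneg aX uX e0 by simp
      finally have m1: "d (fst p a) (fst p (u a)) < r" using lp by simp
      have "d (fst p0 (u a)) (fst p0 a) = snd p0 (d (u a) a)" using P0(5) aX uX by simp
      also have "\<dots> < snd p0 e" using doa_strict[OF P0(3), of "d (u a) a" e] u[OF aX] d_nonneg aX uX e0 by simp
      finally have m2: "d (fst p0 (u a)) (fst p0 a) < r" using le by simp
      have "d (fst p a) (fst p0 (u a)) < r"
        using ultra_lt[OF P(6)[OF aX] P(6)[OF uX[OF aX]] P0(6)[OF uX[OF aX]] m1 m] .
      then show "d (fst p a) (fst p0 a) < r"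
        using ultra_lt[OF P(6)[OF aX] P0(6)[OF uX[OF aX]] P0(6)[OF aX] _ m2] by simp
    qed
    then show "q \<in> beta_bar U X d ` AutM_nbhd X d A r p0" using bq by force
  qed
  ultimately show ?thesis by blast
qed

lemma beta_open: "open_map (AutM_topology X d) (AutB_topology U d) (beta_bar U X d)"
  unfolding open_map_def
proof (intro allI impI)
  fix V assume V: "openin (AutM_topology X d) V"
  have Vc: "V \<subseteq> carrier (AutM X d)" using openin_subset[OF V] topspace_AutM[of X d] by simp
  show "openin (AutB_topology U d) (beta_bar U X d ` V)"
  proof (subst openin_subopen, intro ballI)
    fix q0 assume "q0 \<in> beta_bar U X d ` V"
    then obtain p0 where p0: "p0 \<in> V" "q0 = beta_bar U X d p0" by blast
    obtain A r where Ar: "finite A" "A \<subseteq> X" "0 < r" "AutM_nbhd X d A r p0 \<subseteq> V"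
      using bspec[OF open_nbhd_base[OF V] p0(1)] by blast
    obtain W where W: "openin (AutB_topology U d) W" "beta_bar U X d p0 \<in> W" "W \<subseteq> beta_bar U X d ` AutM_nbhd X d A r p0"
      using beta_nbhd_open[of p0 A r] p0 Vc Ar by blast
    have "W \<subseteq> beta_bar U X d ` V" using W(3) Ar(4) by blast
    then show "\<exists>T. openin (AutB_topology U d) T \<and> q0 \<in> T \<and> T \<subseteq> beta_bar U X d ` V"
      using W p0 by blast
  qed
qed

lemma beta_homeo: "homeomorphic_map (AutM_topology X d) (AutB_topology U d) (beta_bar U X d)"
proof (rule bijective_open_imp_homeomorphic_map[OF beta_continuous beta_open])
  show "beta_bar U X d ` topspace (AutM_topology X d) = topspace (AutB_topology U d)"
    using beta_bij unfolding bij_betw_def topspace_AutM topspace_AutB by blast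
  show "inj_on (beta_bar U X d) (topspace (AutM_topology X d))"
    using beta_bij unfolding bij_betw_def topspace_AutM by blast
qed

end

section \<open>AutB is a topological group\<close>

lemma contB_intro:
  assumes "\<And>x. x \<in> topspace Y \<Longrightarrow> f x \<in> carrier (AutB S d)"
    and "\<And>B C. B \<in> balls S d \<Longrightarrow> openin Y {x \<in> topspace Y. fst (f x) B = C}"
    and "\<And>q s. 0 \<le> q \<Longrightarrow> openin Y {x \<in> topspace Y. snd (f x) q = s}"
  shows "continuous_map Y (AutB_topology S d) f"
  unfolding AutB_topology_def
proof (rule continuous_map_generated_by)
  fix x assume "x \<in> topspace Y"
  then show "f x \<in> \<Union>({carrier (AutB S d)} \<union> {{p \<in> carrier (AutB S d). fst p B = C} |B C. B \<in> balls S d} \<union>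
         {{p \<in> carrier (AutB S d). snd p q = s} |q s. 0 \<le> q})" using assms(1) by blast
next
  fix T assume "T \<in> {carrier (AutB S d)} \<union> {{p \<in> carrier (AutB S d). fst p B = C} |B C. B \<in> balls S d} \<union>
         {{p \<in> carrier (AutB S d). snd p q = s} |q s. 0 \<le> q}"
  then consider "T = carrier (AutB S d)"
    | B C where "B \<in> balls S d" "T = {p \<in> carrier (AutB S d). fst p B = C}"
    | q s where "0 \<le> q" "T = {p \<in> carrier (AutB S d). snd p q = s}" by blast
  then show "openin Y {x \<in> topspace Y. f x \<in> T}"
  proof cases
    case 1
    then have "{x \<in> topspace Y. f x \<in> T} = topspace Y" using assms(1) by auto
    then show ?thesis by simp
  next
    case (2 B C)
    then have "{x \<in> topspace Y. f x \<in> T} = {x \<in> topspace Y. fst (f x) B = C}" using assms(1) by auto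
    then show ?thesis using assms(2)[OF 2(1)] by simp
  next
    case (3 q s)
    then have "{x \<in> topspace Y. f x \<in> T} = {x \<in> topspace Y. snd (f x) q = s}" using assms(1) by auto
    then show ?thesis using assms(3)[OF 3(1)] by simp
  qed
qed

lemma topological_group_AutB: "topological_group (AutB S d) (AutB_topology S d)"
  unfolding topological_group_def
proof (intro conjI group_AutB topspace_AutB)
  let ?T = "AutB_topology S d" and ?G = "AutB S d"
  have tsp: "topspace (prod_topology ?T ?T) = carrier ?G \<times> carrier ?G" by (simp add: topspace_AutB)
  show "continuous_map (prod_topology ?T ?T) ?T (\<lambda>(a, b). a \<otimes>\<^bsub>?G\<^esub> b)"
  proof (rule contB_intro)
    fix x assume "x \<in> topspace (prod_topology ?T ?T)"
    then show "(case x of (a, b) \<Rightarrow> a \<otimes>\<^bsub>?G\<^esub> b) \<in> carrier ?G"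
      using monoid.m_closed[OF group.is_monoid[OF group_AutB]] tsp by (auto split: prod.splits)
  next
    fix B C assume B: "B \<in> balls S d"
    show "openin (prod_topology ?T ?T) {x \<in> topspace (prod_topology ?T ?T). fst (case x of (a, b) \<Rightarrow> a \<otimes>\<^bsub>?G\<^esub> b) B = C}"
    proof (subst openin_subopen, intro ballI)
      fix x assume x: "x \<in> {x \<in> topspace (prod_topology ?T ?T). fst (case x of (a, b) \<Rightarrow> a \<otimes>\<^bsub>?G\<^esub> b) B = C}"
      obtain a0 b0 where ab: "x = (a0, b0)" by (cases x)
      have a0: "a0 \<in> carrier ?G" and b0: "b0 \<in> carrier ?G" and e: "fst a0 (fst b0 B) = C"
        using x ab tsp by (auto simp: AutB_def)
      let ?B' = "fst b0 B"
      let ?T1 = "{a \<in> carrier ?G. fst a ?B' = C} \<times> {b \<in> carrier ?G. fst b B = ?B'}"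
      have B': "?B' \<in> balls S d" using ball_autD(7)[of S d b0 B] b0 B by (simp add: AutB_def)
      have "openin (prod_topology ?T ?T) ?T1"
        using openB_fst[OF B', of C] openB_fst[OF B, of ?B'] by (simp add: openin_prod_Times_iff)
      moreover have "x \<in> ?T1" using ab a0 b0 e by simp
      moreover have "?T1 \<subseteq> {x \<in> topspace (prod_topology ?T ?T). fst (case x of (a, b) \<Rightarrow> a \<otimes>\<^bsub>?G\<^esub> b) B = C}"
        using tsp by (auto simp: AutB_def)
      ultimately show "\<exists>T. openin (prod_topology ?T ?T) T \<and> x \<in> T \<and> T \<subseteq> {x \<in> topspace (prod_topology ?T ?T). fst (case x of (a, b) \<Rightarrow> a \<otimes>\<^bsub>?G\<^esub> b) B = C}"
        by blast
    qed
  next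
    fix q s :: rat assume q: "0 \<le> q"
    show "openin (prod_topology ?T ?T) {x \<in> topspace (prod_topology ?T ?T). snd (case x of (a, b) \<Rightarrow> a \<otimes>\<^bsub>?G\<^esub> b) q = s}"
    proof (subst openin_subopen, intro ballI)
      fix x assume x: "x \<in> {x \<in> topspace (prod_topology ?T ?T). snd (case x of (a, b) \<Rightarrow> a \<otimes>\<^bsub>?G\<^esub> b) q = s}"
      obtain a0 b0 where ab: "x = (a0, b0)" by (cases x)
      have a0: "a0 \<in> carrier ?G" and b0: "b0 \<in> carrier ?G" and e: "snd a0 (snd b0 q) = s"
        using x ab tsp by (auto simp: AutB_def)
      let ?q' = "snd b0 q"
      let ?T1 = "{a \<in> carrier ?G. snd a ?q' = s} \<times> {b \<in> carrier ?G. snd b q = ?q'}"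
      have q': "0 \<le> ?q'" using doa_nonneg[OF ball_autD(5)[of S d b0] q] b0 by (simp add: AutB_def)
      have "openin (prod_topology ?T ?T) ?T1"
        using openB_snd[OF q', of S d s] openB_snd[OF q, of S d ?q'] by (simp add: openin_prod_Times_iff)
      moreover have "x \<in> ?T1" using ab a0 b0 e by simp
      moreover have "?T1 \<subseteq> {x \<in> topspace (prod_topology ?T ?T). snd (case x of (a, b) \<Rightarrow> a \<otimes>\<^bsub>?G\<^esub> b) q = s}"
        using tsp by (auto simp: AutB_def)
      ultimately show "\<exists>T. openin (prod_topology ?T ?T) T \<and> x \<in> T \<and> T \<subseteq> {x \<in> topspace (prod_topology ?T ?T). snd (case x of (a, b) \<Rightarrow> a \<otimes>\<^bsub>?G\<^esub> b) q = s}"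
        by blast
    qed
  qed
  show "continuous_map ?T ?T (\<lambda>a. inv\<^bsub>?G\<^esub> a)"
  proof (rule contB_intro)
    fix x assume "x \<in> topspace ?T"
    then show "inv\<^bsub>?G\<^esub> x \<in> carrier ?G" using group.inv_closed[OF group_AutB[of S d], of x] topspace_AutB[of S d] by simp
  next
    fix B C assume B: "B \<in> balls S d"
    have eq: "{x \<in> topspace ?T. fst (inv\<^bsub>?G\<^esub> x) B = C} = (if C \<in> balls S d then {p \<in> carrier ?G. fst p C = B} else {})"
    proof -
      have "fst (inv\<^bsub>?G\<^esub> p) B = C \<longleftrightarrow> C \<in> balls S d \<and> fst p C = B" if p: "p \<in> carrier ?G" for p
      proof -
        have pb: "ball_aut S d p" using p by (simp add: AutB_def)
        note P = ball_autD[OF pb]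
        have "fst (inv\<^bsub>?G\<^esub> p) B = inv_into (balls S d) (fst p) B" using inv_AutB[OF p] B by (simp add: invB_def)
        moreover have "inv_into (balls S d) (fst p) B = C \<longleftrightarrow> C \<in> balls S d \<and> fst p C = B"
        proof
          assume h: "inv_into (balls S d) (fst p) B = C"
          have "B \<in> fst p ` balls S d" using P(1) B unfolding bij_betw_def by simp
          then show "C \<in> balls S d \<and> fst p C = B" using h by (metis inv_into_into f_inv_into_f)
        next
          assume "C \<in> balls S d \<and> fst p C = B"
          then show "inv_into (balls S d) (fst p) B = C"
            using P(1) unfolding bij_betw_def by (metis inv_into_f_f)
        qed
        ultimately show ?thesis by simp
      qed
      then have "{x \<in> topspace ?T. fst (inv\<^bsub>?G\<^esub> x) B = C} = {p \<in> carrier ?G. C \<in> balls S d \<and> fst p C = B}"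
        unfolding topspace_AutB by blast
      then show ?thesis by simp
    qed
    show "openin ?T {x \<in> topspace ?T. fst (inv\<^bsub>?G\<^esub> x) B = C}"
      unfolding eq by (cases "C \<in> balls S d") (simp_all add: openB_fst)
  next
    fix q s :: rat assume q: "0 \<le> q"
    have eq: "{x \<in> topspace ?T. snd (inv\<^bsub>?G\<^esub> x) q = s} = (if 0 \<le> s then {p \<in> carrier ?G. snd p s = q} else {})"
    proof -
      have "snd (inv\<^bsub>?G\<^esub> p) q = s \<longleftrightarrow> 0 \<le> s \<and> snd p s = q" if p: "p \<in> carrier ?G" for p
      proof -
        have pb: "ball_aut S d p" using p by (simp add: AutB_def)
        note P = ball_autD[OF pb]
        note I = invD_props[OF P(5)]
        have "snd (inv\<^bsub>?G\<^esub> p) q = invD (snd p) q" using inv_AutB[OF p] by (simp add: invB_def)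
        moreover have "invD (snd p) q = s \<longleftrightarrow> 0 \<le> s \<and> snd p s = q"
        proof
          assume h: "invD (snd p) q = s"
          then show "0 \<le> s \<and> snd p s = q" using I(3)[of q] doa_nonneg[OF I(1) q] by auto
        next
          assume "0 \<le> s \<and> snd p s = q"
          then show "invD (snd p) q = s" using I(2)[of s] by auto
        qed
        ultimately show ?thesis by simp
      qed
      then have "{x \<in> topspace ?T. snd (inv\<^bsub>?G\<^esub> x) q = s} = {p \<in> carrier ?G. 0 \<le> s \<and> snd p s = q}"
        unfolding topspace_AutB by blast
      then show ?thesis by simp
    qed
    show "openin ?T {x \<in> topspace ?T. snd (inv\<^bsub>?G\<^esub> x) q = s}"
      unfolding eq by (cases "0 \<le> s") (simp_all add: openB_snd)
  qed
qed

section \<open>Transfer\<close>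

lemma topological_group_transfer:
  assumes G: "group G" and tG: "topspace T = carrier G" and h: "h \<in> iso G H"
    and hm: "homeomorphic_map T S h" and H: "topological_group H S"
  shows "topological_group G T"
proof -
  obtain k where k: "homeomorphic_maps T S h k" using hm homeomorphic_map_maps by blast
  have ch: "continuous_map T S h" and ck: "continuous_map S T k"
    and kh: "\<And>x. x \<in> topspace T \<Longrightarrow> k (h x) = x" using k unfolding homeomorphic_maps_def by auto
  have Hg: "group H" and tH: "topspace S = carrier H"
    and mH: "continuous_map (prod_topology S S) S (\<lambda>(a, b). a \<otimes>\<^bsub>H\<^esub> b)"
    and iH: "continuous_map S S (\<lambda>a. inv\<^bsub>H\<^esub> a)" using H unfolding topological_group_def by auto
  have hom: "h \<in> hom G H" using h unfolding iso_def by simp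
  interpret gh: group_hom G H h using G Hg hom by (simp add: group_hom_def group_hom_axioms_def)
  have m: "continuous_map (prod_topology T T) T (\<lambda>(a, b). a \<otimes>\<^bsub>G\<^esub> b)"
  proof (rule continuous_map_eq)
    have c1: "continuous_map (prod_topology T T) (prod_topology S S) (\<lambda>x. (h (fst x), h (snd x)))"
      by (intro continuous_map_pairedI continuous_map_compose[OF continuous_map_fst ch, unfolded o_def]
          continuous_map_compose[OF continuous_map_snd ch, unfolded o_def])
    show "continuous_map (prod_topology T T) T (k \<circ> (\<lambda>(a, b). a \<otimes>\<^bsub>H\<^esub> b) \<circ> (\<lambda>x. (h (fst x), h (snd x))))"
      by (intro continuous_map_compose[OF c1] continuous_map_compose[OF mH ck] continuous_map_compose[OF _ ck])
  next
    fix x assume x: "x \<in> topspace (prod_topology T T)"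
    obtain a b where ab: "x = (a, b)" by (cases x)
    have abc: "a \<in> carrier G" "b \<in> carrier G" using x ab tG by auto
    have "k (h a \<otimes>\<^bsub>H\<^esub> h b) = k (h (a \<otimes>\<^bsub>G\<^esub> b))" using abc by simp
    also have "\<dots> = a \<otimes>\<^bsub>G\<^esub> b"
    proof -
      have "a \<otimes>\<^bsub>G\<^esub> b \<in> carrier G" using abc by simp
      then show ?thesis using kh tG by blast
    qed
    finally show "(k \<circ> (\<lambda>(a, b). a \<otimes>\<^bsub>H\<^esub> b) \<circ> (\<lambda>x. (h (fst x), h (snd x)))) x = (case x of (a, b) \<Rightarrow> a \<otimes>\<^bsub>G\<^esub> b)"
      using ab by simp
  qed
  have i: "continuous_map T T (\<lambda>a. inv\<^bsub>G\<^esub> a)"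
  proof (rule continuous_map_eq)
    show "continuous_map T T (k \<circ> (\<lambda>a. inv\<^bsub>H\<^esub> a) \<circ> h)"
      by (intro continuous_map_compose[OF ch] continuous_map_compose[OF iH ck])
  next
    fix a assume a: "a \<in> topspace T"
    then have ac: "a \<in> carrier G" using tG by simp
    have "k (inv\<^bsub>H\<^esub> (h a)) = k (h (inv\<^bsub>G\<^esub> a))" using ac by simp
    also have "\<dots> = inv\<^bsub>G\<^esub> a"
    proof -
      have "inv\<^bsub>G\<^esub> a \<in> carrier G" using ac by simp
      then show ?thesis using kh tG by blast
    qed
    finally show "(k \<circ> (\<lambda>a. inv\<^bsub>H\<^esub> a) \<circ> h) a = inv\<^bsub>G\<^esub> a" by simp
  qed
  show ?thesis unfolding topological_group_def using G tG m i by simp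
qed

lemma Polish_transfer:
  assumes "homeomorphic_map T S h" "Polish_space_top S"
  shows "Polish_space_top T"
proof -
  have "T homeomorphic_space S" using assms(1) by (rule homeomorphic_map_imp_homeomorphic_space)
  then show ?thesis using assms(2) homeomorphic_completely_metrizable_space homeomorphic_separable_space
    unfolding Polish_space_top_def by blast
qed

context UU
begin

lemma countable_balls: "countable (balls U d)"
proof -
  have "balls U d \<subseteq> (\<lambda>(x, y). ball_in U d x y) ` (U \<times> U)" unfolding balls_def by auto
  moreover have "countable ((\<lambda>(x, y). ball_in U d x y) ` (U \<times> U))" using countable_U by simp
  ultimately show ?thesis by (rule countable_subset)
qed

lemma separable_AutB: "separable_space (AutB_topology U d)"
proof -
  let ?S = "{carrier (AutB U d)} \<union> {{p \<in> carrier (AutB U d). fst p B = C} |B C. B \<in> balls U d} \<union>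
         {{p \<in> carrier (AutB U d). snd p q = s} |q s. 0 \<le> q}"
  have 1: "{{p \<in> carrier (AutB U d). fst p B = C} |B C. B \<in> balls U d} \<subseteq>
      insert {} ((\<lambda>(B, C). {p \<in> carrier (AutB U d). fst p B = C}) ` (balls U d \<times> balls U d))"
  proof
    fix T assume "T \<in> {{p \<in> carrier (AutB U d). fst p B = C} |B C. B \<in> balls U d}"
    then obtain B C where BC: "B \<in> balls U d" "T = {p \<in> carrier (AutB U d). fst p B = C}" by blast
    show "T \<in> insert {} ((\<lambda>(B, C). {p \<in> carrier (AutB U d). fst p B = C}) ` (balls U d \<times> balls U d))"
    proof (cases "C \<in> balls U d")
      case True then show ?thesis using BC by auto
    next
      case False
      have "p \<notin> T" for p
      proof
        assume "p \<in> T"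
        then have "ball_aut U d p" "fst p B = C" using BC by (simp_all add: AutB_def)
        then show False using ball_autD(7)[of U d p B] BC False by simp
      qed
      then have "T = {}" by blast
      then show ?thesis by simp
    qed
  qed
  have c1: "countable {{p \<in> carrier (AutB U d). fst p B = C} |B C. B \<in> balls U d}"
    by (rule countable_subset[OF 1]) (simp add: countable_balls)
  have 2: "{{p \<in> carrier (AutB U d). snd p q = s} |q s. 0 \<le> q} \<subseteq>
      (\<lambda>(q, s). {p \<in> carrier (AutB U d). snd p q = s}) ` (UNIV :: (rat \<times> rat) set)" by auto
  have c2: "countable {{p \<in> carrier (AutB U d). snd p q = s} |q s. 0 \<le> q}"
    by (rule countable_subset[OF 2]) simp
  have "countable ?S" using c1 c2 by simp
  then have "second_countable (AutB_topology U d)" unfolding AutB_topology_def by (rule second_countable_generated)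
  then show ?thesis by (rule second_countable_imp_separable_space)
qed

end

section \<open>Complete metrizability of AutB\<close>

definition PB :: "'a set \<Rightarrow> ('a \<Rightarrow> 'a \<Rightarrow> rat) \<Rightarrow> ('a set \<Rightarrow> 'a set) topology" where
  "PB S d = product_topology (\<lambda>_. discrete_topology (balls S d)) (balls S d)"

definition PQ :: "(rat \<Rightarrow> rat) topology" where
  "PQ = product_topology (\<lambda>_. discrete_topology {q::rat. 0 \<le> q}) {q. 0 \<le> q}"

definition PP :: "'a set \<Rightarrow> ('a \<Rightarrow> 'a \<Rightarrow> rat) \<Rightarrow> ((('a set \<Rightarrow> 'a set) \<times> ('a set \<Rightarrow> 'a set)) \<times> (rat \<Rightarrow> rat)) topology" where
  "PP S d = prod_topology (prod_topology (PB S d) (PB S d)) PQ"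

definition embB :: "'a set \<Rightarrow> ('a \<Rightarrow> 'a \<Rightarrow> rat) \<Rightarrow> ('a set \<Rightarrow> 'a set) \<times> (rat \<Rightarrow> rat) \<Rightarrow> (('a set \<Rightarrow> 'a set) \<times> ('a set \<Rightarrow> 'a set)) \<times> (rat \<Rightarrow> rat)" where
  "embB S d p = ((restrict (fst p) (balls S d), restrict (fst (invB S d p)) (balls S d)), restrict (snd p) {q. 0 \<le> q})"

definition unembB :: "'a set \<Rightarrow> ('a \<Rightarrow> 'a \<Rightarrow> rat) \<Rightarrow> (('a set \<Rightarrow> 'a set) \<times> ('a set \<Rightarrow> 'a set)) \<times> (rat \<Rightarrow> rat) \<Rightarrow> ('a set \<Rightarrow> 'a set) \<times> (rat \<Rightarrow> rat)" where
  "unembB S d x = ((\<lambda>B. if B \<in> balls S d then fst (fst x) B else B), (\<lambda>q. if 0 \<le> q then snd x q else q))"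

definition KB :: "'a set \<Rightarrow> ('a \<Rightarrow> 'a \<Rightarrow> rat) \<Rightarrow> ((('a set \<Rightarrow> 'a set) \<times> ('a set \<Rightarrow> 'a set)) \<times> (rat \<Rightarrow> rat)) set" where
  "KB S d = {x \<in> topspace (PP S d).
     (\<forall>(B, C)\<in>balls S d \<times> balls S d. fst (fst x) B = C \<longrightarrow> snd (fst x) C = B) \<and>
     (\<forall>(B, C)\<in>balls S d \<times> balls S d. snd (fst x) B = C \<longrightarrow> fst (fst x) C = B) \<and>
     (\<forall>(B, C)\<in>balls S d \<times> balls S d. B \<subseteq> C \<longleftrightarrow> fst (fst x) B \<subseteq> fst (fst x) C) \<and>
     (\<forall>(B, C)\<in>balls S d \<times> balls S d. ball_adj S d B C \<longleftrightarrow> ball_adj S d (fst (fst x) B) (fst (fst x) C)) \<and>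
     (\<forall>B\<in>balls S d. ball_level S d (fst (fst x) B) = snd x (ball_level S d B)) \<and>
     (\<forall>(p, q)\<in>{q::rat. 0 \<le> q} \<times> {q. 0 \<le> q}. p \<le> q \<longleftrightarrow> snd x p \<le> snd x q) \<and>
     snd x 0 = 0}"

lemma closed2:
  assumes "continuous_map T (discrete_topology Z1) f" "continuous_map T (discrete_topology Z2) g"
  shows "closedin T {x \<in> topspace T. R (f x) (g x)}"
proof -
  have "continuous_map T (prod_topology (discrete_topology Z1) (discrete_topology Z2)) (\<lambda>x. (f x, g x))"
    using continuous_map_pairedI[OF assms] .
  then have "continuous_map T (discrete_topology (Z1 \<times> Z2)) (\<lambda>x. (f x, g x))"
    by (simp add: prod_topology_discrete_topology)
  from continuous_discrete_preimage_closed[OF this, of "\<lambda>(a, b). R a b"] show ?thesis by simp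
qed

lemma coord_g: "B \<in> balls S d \<Longrightarrow> continuous_map (PP S d) (discrete_topology (balls S d)) (\<lambda>x. fst (fst x) B)"
proof -
  assume B: "B \<in> balls S d"
  have "continuous_map (PP S d) (discrete_topology (balls S d)) ((\<lambda>f. f B) \<circ> fst \<circ> fst)"
    unfolding PP_def PB_def
    by (rule continuous_map_compose[OF continuous_map_fst continuous_map_compose[OF continuous_map_fst
        continuous_map_product_projection[OF B, of "\<lambda>_. discrete_topology (balls S d)", simplified]]])
  then show ?thesis by (simp add: o_def)
qed

lemma coord_h: "B \<in> balls S d \<Longrightarrow> continuous_map (PP S d) (discrete_topology (balls S d)) (\<lambda>x. snd (fst x) B)"
proof -
  assume B: "B \<in> balls S d"
  have "continuous_map (PP S d) (discrete_topology (balls S d)) ((\<lambda>f. f B) \<circ> snd \<circ> fst)"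
    unfolding PP_def PB_def
    by (rule continuous_map_compose[OF continuous_map_fst continuous_map_compose[OF continuous_map_snd
        continuous_map_product_projection[OF B, of "\<lambda>_. discrete_topology (balls S d)", simplified]]])
  then show ?thesis by (simp add: o_def)
qed

lemma coord_l: "0 \<le> q \<Longrightarrow> continuous_map (PP S d) (discrete_topology {q::rat. 0 \<le> q}) (\<lambda>x. snd x q)"
proof -
  assume q: "0 \<le> q"
  then have qq: "q \<in> {q::rat. 0 \<le> q}" by simp
  have "continuous_map (PP S d) (discrete_topology {q::rat. 0 \<le> q}) ((\<lambda>f. f q) \<circ> snd)"
    unfolding PP_def PQ_def
    by (rule continuous_map_compose[OF continuous_map_snd
        continuous_map_product_projection[OF qq, of "\<lambda>_. discrete_topology {q::rat. 0 \<le> q}", simplified]])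
  then show ?thesis by (simp add: o_def)
qed

lemma topspace_PP: "topspace (PP S d) =
   (PiE (balls S d) (\<lambda>_. balls S d) \<times> PiE (balls S d) (\<lambda>_. balls S d)) \<times> PiE {q::rat. 0 \<le> q} (\<lambda>_. {q. 0 \<le> q})"
  unfolding PP_def PB_def PQ_def by simp

lemma cms_PP: "countable (balls S d) \<Longrightarrow> completely_metrizable_space (PP S d)"
proof -
  assume c: "countable (balls S d)"
  have "countable {q::rat. 0 \<le> q}" by simp
  then have "completely_metrizable_space PQ"
    unfolding PQ_def completely_metrizable_space_product_topology
    by (simp add: completely_metrizable_space_discrete_topology countable_subset[of _ "{q::rat. 0 \<le> q}"])
  moreover have "completely_metrizable_space (PB S d)"
    unfolding PB_def completely_metrizable_space_product_topology
    using c by (simp add: completely_metrizable_space_discrete_topology countable_subset[of _ "balls S d"])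
  ultimately show ?thesis unfolding PP_def
    by (simp add: completely_metrizable_space_prod_topology)
qed

context UU
begin

lemma closed_KB: "closedin (PP U d) (KB U d)"
  unfolding KB_def
proof (intro closedin_conj closedin_all)
  fix i assume "i \<in> balls U d \<times> balls U d"
  then obtain B C where i: "i = (B, C)" "B \<in> balls U d" "C \<in> balls U d" by blast
  show "closedin (PP U d) {x \<in> topspace (PP U d). case i of (B, C) \<Rightarrow> fst (fst x) B = C \<longrightarrow> snd (fst x) C = B}"
    using closed2[OF coord_g[OF i(2)] coord_h[OF i(3)], of "\<lambda>a b. a = C \<longrightarrow> b = B"] i by simp
  show "closedin (PP U d) {x \<in> topspace (PP U d). case i of (B, C) \<Rightarrow> snd (fst x) B = C \<longrightarrow> fst (fst x) C = B}"
    using closed2[OF coord_h[OF i(2)] coord_g[OF i(3)], of "\<lambda>a b. a = C \<longrightarrow> b = B"] i by simp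
  show "closedin (PP U d) {x \<in> topspace (PP U d). case i of (B, C) \<Rightarrow> B \<subseteq> C \<longleftrightarrow> fst (fst x) B \<subseteq> fst (fst x) C}"
    using closed2[OF coord_g[OF i(2)] coord_g[OF i(3)], of "\<lambda>a b. B \<subseteq> C \<longleftrightarrow> a \<subseteq> b"] i by simp
  show "closedin (PP U d) {x \<in> topspace (PP U d). case i of (B, C) \<Rightarrow> ball_adj U d B C \<longleftrightarrow> ball_adj U d (fst (fst x) B) (fst (fst x) C)}"
    using closed2[OF coord_g[OF i(2)] coord_g[OF i(3)], of "\<lambda>a b. ball_adj U d B C \<longleftrightarrow> ball_adj U d a b"] i by simp
next
  fix B assume B: "B \<in> balls U d"
  have lv: "0 \<le> ball_level U d B" using level_pos[OF B] by simp
  show "closedin (PP U d) {x \<in> topspace (PP U d). ball_level U d (fst (fst x) B) = snd x (ball_level U d B)}"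
    using closed2[OF coord_g[OF B] coord_l[OF lv, of U d], of "\<lambda>a b. ball_level U d a = b"] by simp
next
  fix i assume "i \<in> {q::rat. 0 \<le> q} \<times> {q::rat. 0 \<le> q}"
  then obtain p q where i: "i = (p, q)" "0 \<le> p" "0 \<le> q" by blast
  show "closedin (PP U d) {x \<in> topspace (PP U d). case i of (p, q) \<Rightarrow> p \<le> q \<longleftrightarrow> snd x p \<le> snd x q}"
    using closed2[OF coord_l[OF i(2), of U d] coord_l[OF i(3), of U d], of "\<lambda>a b. p \<le> q \<longleftrightarrow> a \<le> b"] i by simp
next
  show "closedin (PP U d) {x \<in> topspace (PP U d). snd x 0 = 0}"
    using closed2[OF coord_l[of 0 U d] coord_l[of 0 U d], of "\<lambda>a b. a = 0"] by simp
qed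

end

context UU
begin

lemma emb_in_KB:
  assumes p: "ball_aut U d p"
  shows "embB U d p \<in> KB U d"
proof -
  note P = ball_autD[OF p]
  let ?h = "inv_into (balls U d) (fst p)"
  have hB: "B \<in> balls U d \<Longrightarrow> ?h B \<in> balls U d" for B using P(1) by (metis bij_betw_def inv_into_into)
  have gh: "B \<in> balls U d \<Longrightarrow> fst p (?h B) = B" for B using P(1) by (simp add: bij_betw_inv_into_right)
  have hg: "B \<in> balls U d \<Longrightarrow> ?h (fst p B) = B" for B using P(1) by (simp add: bij_betw_inv_into_left)
  have ifst: "B \<in> balls U d \<Longrightarrow> fst (invB U d p) B = ?h B" for B by (simp add: invB_def)
  have t1: "restrict (fst p) (balls U d) \<in> PiE (balls U d) (\<lambda>_. balls U d)" using P(7) by simp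
  have t2: "restrict (fst (invB U d p)) (balls U d) \<in> PiE (balls U d) (\<lambda>_. balls U d)" using hB ifst by simp
  have t3: "restrict (snd p) {q. 0 \<le> q} \<in> PiE {q::rat. 0 \<le> q} (\<lambda>_. {q. 0 \<le> q})" using doa_nonneg[OF P(5)] by simp
  show ?thesis unfolding KB_def embB_def topspace_PP
  proof (intro CollectI conjI ballI; (unfold fst_conv snd_conv)?)
    show "((restrict (fst p) (balls U d), restrict (fst (invB U d p)) (balls U d)), restrict (snd p) {q. 0 \<le> q}) \<in>
      (PiE (balls U d) (\<lambda>_. balls U d) \<times> PiE (balls U d) (\<lambda>_. balls U d)) \<times> PiE {q::rat. 0 \<le> q} (\<lambda>_. {q. 0 \<le> q})"
      using t1 t2 t3 by simp
  next
    fix i assume "i \<in> balls U d \<times> balls U d"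
    then obtain B C where i: "i = (B, C)" "B \<in> balls U d" "C \<in> balls U d" by blast
    show "case i of (B, C) \<Rightarrow> restrict (fst p) (balls U d) B = C \<longrightarrow> restrict (fst (invB U d p)) (balls U d) C = B"
      using i hg ifst by auto
    show "case i of (B, C) \<Rightarrow> restrict (fst (invB U d p)) (balls U d) B = C \<longrightarrow> restrict (fst p) (balls U d) C = B"
      using i gh ifst by auto
    show "case i of (B, C) \<Rightarrow> B \<subseteq> C \<longleftrightarrow> restrict (fst p) (balls U d) B \<subseteq> restrict (fst p) (balls U d) C"
      using i P(3) by simp
    show "case i of (B, C) \<Rightarrow> ball_adj U d B C \<longleftrightarrow> ball_adj U d (restrict (fst p) (balls U d) B) (restrict (fst p) (balls U d) C)"
      using i P(4) by simp
  next
    fix B assume B: "B \<in> balls U d"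
    show "ball_level U d (restrict (fst p) (balls U d) B) = restrict (snd p) {q. 0 \<le> q} (ball_level U d B)"
      using B P(6) level_pos[OF B] by simp
  next
    fix i assume "i \<in> {q::rat. 0 \<le> q} \<times> {q::rat. 0 \<le> q}"
    then obtain a b where i: "i = (a, b)" "0 \<le> a" "0 \<le> b" by blast
    show "case i of (a, b) \<Rightarrow> a \<le> b \<longleftrightarrow> restrict (snd p) {q. 0 \<le> q} a \<le> restrict (snd p) {q. 0 \<le> q} b"
      using i doa_mono[OF P(5)] by simp
  next
    show "restrict (snd p) {q. 0 \<le> q} 0 = 0" using doa_zero[OF P(5)] by simp
  qed
qed

lemma KB_D:
  assumes x: "x \<in> KB U d"
  shows "fst (fst x) \<in> PiE (balls U d) (\<lambda>_. balls U d)" "snd (fst x) \<in> PiE (balls U d) (\<lambda>_. balls U d)"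
    "snd x \<in> PiE {q::rat. 0 \<le> q} (\<lambda>_. {q. 0 \<le> q})"
    "\<And>B C. B \<in> balls U d \<Longrightarrow> C \<in> balls U d \<Longrightarrow> fst (fst x) B = C \<Longrightarrow> snd (fst x) C = B"
    "\<And>B C. B \<in> balls U d \<Longrightarrow> C \<in> balls U d \<Longrightarrow> snd (fst x) B = C \<Longrightarrow> fst (fst x) C = B"
    "\<And>B C. B \<in> balls U d \<Longrightarrow> C \<in> balls U d \<Longrightarrow> B \<subseteq> C \<longleftrightarrow> fst (fst x) B \<subseteq> fst (fst x) C"
    "\<And>B C. B \<in> balls U d \<Longrightarrow> C \<in> balls U d \<Longrightarrow> ball_adj U d B C \<longleftrightarrow> ball_adj U d (fst (fst x) B) (fst (fst x) C)"
    "\<And>B. B \<in> balls U d \<Longrightarrow> ball_level U d (fst (fst x) B) = snd x (ball_level U d B)"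
    "\<And>a b. 0 \<le> a \<Longrightarrow> 0 \<le> b \<Longrightarrow> a \<le> b \<longleftrightarrow> snd x a \<le> snd x b"
    "snd x 0 = 0"
  using x unfolding KB_def topspace_PP by (auto simp: mem_Times_iff)

lemma unemb_ball_aut:
  assumes x: "x \<in> KB U d"
  shows "ball_aut U d (unembB U d x)"
proof -
  note K = KB_D[OF x]
  let ?g = "fst (fst x)" and ?h = "snd (fst x)" and ?l = "snd x"
  let ?G = "\<lambda>B. if B \<in> balls U d then ?g B else B"
  let ?L = "\<lambda>q. if 0 \<le> q then ?l q else q"
  have gB: "B \<in> balls U d \<Longrightarrow> ?g B \<in> balls U d" for B using K(1) by (auto simp: PiE_def Pi_def)
  have hB: "B \<in> balls U d \<Longrightarrow> ?h B \<in> balls U d" for B using K(2) by (auto simp: PiE_def Pi_def)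
  have lQ: "0 \<le> q \<Longrightarrow> 0 \<le> ?l q" for q using K(3) by (auto simp: PiE_def Pi_def)
  have hg: "B \<in> balls U d \<Longrightarrow> ?h (?g B) = B" for B using K(4) gB by blast
  have gh: "B \<in> balls U d \<Longrightarrow> ?g (?h B) = B" for B using K(5) hB by blast
  have bij: "bij_betw ?G (balls U d) (balls U d)"
    by (rule bij_betw_byWitness[where f'="?h"]) (use gB hB hg gh in auto)
  have Lbij: "bij_betw ?L {q. 0 \<le> q} {q. 0 \<le> q}"
  proof -
    have inj: "inj_on ?L {q. 0 \<le> q}"
    proof (rule inj_onI)
      fix a b :: rat assume ab: "a \<in> {q. 0 \<le> q}" "b \<in> {q. 0 \<le> q}" "?L a = ?L b"
      then show "a = b" using K(9)[of a b] K(9)[of b a] by auto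
    qed
    have "{q. 0 \<le> q} \<subseteq> ?L ` {q. 0 \<le> q}"
    proof
      fix t :: rat assume t: "t \<in> {q. 0 \<le> q}"
      show "t \<in> ?L ` {q. 0 \<le> q}"
      proof (cases "t = 0")
        case True then show ?thesis using K(10) by force
      next
        case False
        then have t0: "0 < t" using t by simp
        obtain c where c: "c \<in> U" using U_nonempty by blast
        have cX: "c \<in> X" using c UX by auto
        let ?B = "bU U d c t"
        have Bb: "?B \<in> balls U d" using bU_in_balls[OF cX t0] .
        have "t = ball_level U d (?g (?h ?B))" using gh[OF Bb] level_bU[OF cX t0] by simp
        also have "\<dots> = ?l (ball_level U d (?h ?B))" using K(8)[OF hB[OF Bb]] .
        finally have "t = ?L (ball_level U d (?h ?B))" using level_pos[OF hB[OF Bb]] by simp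
        moreover have "ball_level U d (?h ?B) \<in> {q. 0 \<le> q}" using level_pos[OF hB[OF Bb]] by simp
        ultimately show ?thesis by blast
      qed
    qed
    moreover have "?L ` {q. 0 \<le> q} \<subseteq> {q. 0 \<le> q}" using lQ by auto
    ultimately show ?thesis unfolding bij_betw_def using inj by blast
  qed
  have Ldoa: "dist_order_aut ?L"
    unfolding dist_order_aut_def using Lbij K(9) by simp
  show ?thesis unfolding ball_aut_def unembB_def fst_conv snd_conv
  proof (intro conjI allI impI ballI bij Ldoa)
    fix B B' assume B: "B \<in> balls U d" "B' \<in> balls U d"
    show "B \<subseteq> B' \<longleftrightarrow> ?G B \<subseteq> ?G B'" using K(6)[OF B] B by simp
    show "ball_adj U d B B' \<longleftrightarrow> ball_adj U d (?G B) (?G B')" using K(7)[OF B] B by simp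
  next
    fix B assume B: "B \<in> balls U d"
    show "ball_level U d (?G B) = ?L (ball_level U d B)" using K(8)[OF B] B level_pos[OF B] by simp
  qed simp
qed

lemma unemb_emb:
  assumes p: "ball_aut U d p"
  shows "unembB U d (embB U d p) = p"
proof -
  note P = ball_autD[OF p]
  have "fst (unembB U d (embB U d p)) B = fst p B" for B
    using P(2) by (simp add: unembB_def embB_def)
  moreover have "snd (unembB U d (embB U d p)) q = snd p q" for q
    using P(5) unfolding dist_order_aut_def by (simp add: unembB_def embB_def)
  ultimately show ?thesis by (simp add: prod_eq_iff fun_eq_iff)
qed

lemma emb_unemb:
  assumes x: "x \<in> KB U d"
  shows "embB U d (unembB U d x) = x"
proof -
  note K = KB_D[OF x]
  let ?g = "fst (fst x)" and ?h = "snd (fst x)" and ?l = "snd x"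
  let ?G = "\<lambda>B. if B \<in> balls U d then ?g B else B"
  have ua: "ball_aut U d (unembB U d x)" using unemb_ball_aut[OF x] .
  have gB: "B \<in> balls U d \<Longrightarrow> ?g B \<in> balls U d" for B using K(1) by (auto simp: PiE_def Pi_def)
  have hB: "B \<in> balls U d \<Longrightarrow> ?h B \<in> balls U d" for B using K(2) by (auto simp: PiE_def Pi_def)
  have gh: "B \<in> balls U d \<Longrightarrow> ?g (?h B) = B" for B using K(5) hB by blast
  have injG: "inj_on ?G (balls U d)" using ball_autD(1)[OF ua] unfolding bij_betw_def by (simp add: unembB_def)
  have e1: "restrict (fst (unembB U d x)) (balls U d) = ?g"
  proof
    fix B show "restrict (fst (unembB U d x)) (balls U d) B = ?g B"
      using K(1) by (cases "B \<in> balls U d") (auto simp: unembB_def PiE_def extensional_def)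
  qed
  have e2: "restrict (fst (invB U d (unembB U d x))) (balls U d) = ?h"
  proof
    fix B show "restrict (fst (invB U d (unembB U d x))) (balls U d) B = ?h B"
    proof (cases "B \<in> balls U d")
      case True
      have "inv_into (balls U d) ?G B = ?h B"
        by (rule inv_into_f_eq[OF injG hB[OF True]]) (use gh[OF True] hB[OF True] in simp)
      then show ?thesis using True by (simp add: invB_def unembB_def)
    next
      case False then show ?thesis using K(2) by (auto simp: PiE_def extensional_def)
    qed
  qed
  have e3: "restrict (snd (unembB U d x)) {q. 0 \<le> q} = ?l"
  proof
    fix q show "restrict (snd (unembB U d x)) {q. 0 \<le> q} q = ?l q"
      using K(3) by (cases "0 \<le> q") (auto simp: unembB_def PiE_def extensional_def)
  qed
  show ?thesis unfolding embB_def e1 e2 e3 by simp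
qed

end

lemma inv_fst_iff:
  assumes p: "p \<in> carrier (AutB S d)" and B: "B \<in> balls S d"
  shows "fst (invB S d p) B = C \<longleftrightarrow> C \<in> balls S d \<and> fst p C = B"
proof -
  have pb: "ball_aut S d p" using p by (simp add: AutB_def)
  note P = ball_autD[OF pb]
  have "fst (invB S d p) B = inv_into (balls S d) (fst p) B" using B by (simp add: invB_def)
  moreover have "inv_into (balls S d) (fst p) B = C \<longleftrightarrow> C \<in> balls S d \<and> fst p C = B"
  proof
    assume h: "inv_into (balls S d) (fst p) B = C"
    have "B \<in> fst p ` balls S d" using P(1) B unfolding bij_betw_def by simp
    then show "C \<in> balls S d \<and> fst p C = B" using h by (metis inv_into_into f_inv_into_f)
  next
    assume "C \<in> balls S d \<and> fst p C = B"
    then show "inv_into (balls S d) (fst p) B = C"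
      using P(1) unfolding bij_betw_def by (metis inv_into_f_f)
  qed
  ultimately show ?thesis by simp
qed

context UU
begin

lemma emb_continuous: "continuous_map (AutB_topology U d) (subtopology (PP U d) (KB U d)) (embB U d)"
  unfolding continuous_map_in_subtopology
proof
  let ?T = "AutB_topology U d"
  have c1: "continuous_map ?T (PB U d) (\<lambda>p. restrict (fst p) (balls U d))"
    unfolding PB_def continuous_map_componentwise
  proof (intro conjI ballI)
    show "(\<lambda>p. restrict (fst p) (balls U d)) ` topspace ?T \<subseteq> extensional (balls U d)" by auto
    fix k assume k: "k \<in> balls U d"
    show "continuous_map ?T (discrete_topology (balls U d)) (\<lambda>p. restrict (fst p) (balls U d) k)"
    proof (rule continuous_map_to_discrete)
      fix p assume "p \<in> topspace ?T"
      then show "restrict (fst p) (balls U d) k \<in> balls U d"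
        using ball_autD(7)[of U d p k] k topspace_AutB[of U d] by (simp add: AutB_def)
    next
      fix z
      have "{p \<in> topspace ?T. restrict (fst p) (balls U d) k = z} = {p \<in> carrier (AutB U d). fst p k = z}"
        using k topspace_AutB[of U d] by simp
      then show "openin ?T {p \<in> topspace ?T. restrict (fst p) (balls U d) k = z}" using openB_fst[OF k] by simp
    qed
  qed
  have c2: "continuous_map ?T (PB U d) (\<lambda>p. restrict (fst (invB U d p)) (balls U d))"
    unfolding PB_def continuous_map_componentwise
  proof (intro conjI ballI)
    show "(\<lambda>p. restrict (fst (invB U d p)) (balls U d)) ` topspace ?T \<subseteq> extensional (balls U d)" by auto
    fix k assume k: "k \<in> balls U d"
    show "continuous_map ?T (discrete_topology (balls U d)) (\<lambda>p. restrict (fst (invB U d p)) (balls U d) k)"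
    proof (rule continuous_map_to_discrete)
      fix p assume "p \<in> topspace ?T"
      then have p: "p \<in> carrier (AutB U d)" using topspace_AutB[of U d] by simp
      show "restrict (fst (invB U d p)) (balls U d) k \<in> balls U d"
        using inv_fst_iff[OF p k, of "fst (invB U d p) k"] k by simp
    next
      fix z
      have eqz: "{p \<in> topspace ?T. restrict (fst (invB U d p)) (balls U d) k = z} = {p \<in> carrier (AutB U d). z \<in> balls U d \<and> fst p z = k}"
      proof -
        have "\<forall>p\<in>carrier (AutB U d). (restrict (fst (invB U d p)) (balls U d) k = z) = (z \<in> balls U d \<and> fst p z = k)"
          using inv_fst_iff[OF _ k] k by simp
        then show ?thesis unfolding topspace_AutB by blast
      qed
      show "openin ?T {p \<in> topspace ?T. restrict (fst (invB U d p)) (balls U d) k = z}"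
        unfolding eqz by (cases "z \<in> balls U d") (simp_all add: openB_fst)
    qed
  qed
  have c3: "continuous_map ?T PQ (\<lambda>p. restrict (snd p) {q. 0 \<le> q})"
    unfolding PQ_def continuous_map_componentwise
  proof (intro conjI ballI)
    show "(\<lambda>p. restrict (snd p) {q. 0 \<le> q}) ` topspace ?T \<subseteq> extensional {q::rat. 0 \<le> q}" by auto
    fix k :: rat assume k: "k \<in> {q. 0 \<le> q}"
    show "continuous_map ?T (discrete_topology {q. 0 \<le> q}) (\<lambda>p. restrict (snd p) {q. 0 \<le> q} k)"
    proof (rule continuous_map_to_discrete)
      fix p assume "p \<in> topspace ?T"
      then show "restrict (snd p) {q. 0 \<le> q} k \<in> {q. 0 \<le> q}"
        using doa_nonneg[OF ball_autD(5)[of U d p]] k topspace_AutB[of U d] by (simp add: AutB_def)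
    next
      fix z
      have "{p \<in> topspace ?T. restrict (snd p) {q. 0 \<le> q} k = z} = {p \<in> carrier (AutB U d). snd p k = z}"
        using k topspace_AutB[of U d] by simp
      then show "openin ?T {p \<in> topspace ?T. restrict (snd p) {q. 0 \<le> q} k = z}" using openB_snd k by simp
    qed
  qed
  show "continuous_map ?T (PP U d) (embB U d)"
    unfolding PP_def embB_def by (intro continuous_map_pairedI c1 c2 c3)
  show "embB U d \<in> topspace ?T \<rightarrow> KB U d"
    using emb_in_KB topspace_AutB[of U d] by (auto simp: AutB_def)
qed

lemma KB_sub: "KB U d \<subseteq> topspace (PP U d)"
  unfolding KB_def by blast

lemma unemb_continuous: "continuous_map (subtopology (PP U d) (KB U d)) (AutB_topology U d) (unembB U d)"
proof (rule contB_intro)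
  let ?Y = "subtopology (PP U d) (KB U d)"
  have ts: "topspace ?Y = KB U d" using KB_sub by auto
  fix x assume "x \<in> topspace ?Y"
  then show "unembB U d x \<in> carrier (AutB U d)" using unemb_ball_aut ts by (simp add: AutB_def)
next
  let ?Y = "subtopology (PP U d) (KB U d)"
  fix B C assume B: "B \<in> balls U d"
  have "{x \<in> topspace ?Y. fst (unembB U d x) B = C} = {x \<in> topspace ?Y. fst (fst x) B = C}"
    using B by (simp add: unembB_def)
  moreover have "openin ?Y {x \<in> topspace ?Y. fst (fst x) B = C}"
    by (rule continuous_discrete_preimage_open[OF continuous_map_from_subtopology[OF coord_g[OF B]]])
  ultimately show "openin ?Y {x \<in> topspace ?Y. fst (unembB U d x) B = C}" by simp
next
  let ?Y = "subtopology (PP U d) (KB U d)"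
  fix q s :: rat assume q: "0 \<le> q"
  have "{x \<in> topspace ?Y. snd (unembB U d x) q = s} = {x \<in> topspace ?Y. snd x q = s}"
    using q by (simp add: unembB_def)
  moreover have "openin ?Y {x \<in> topspace ?Y. snd x q = s}"
    by (rule continuous_discrete_preimage_open[OF continuous_map_from_subtopology[OF coord_l[OF q]]])
  ultimately show "openin ?Y {x \<in> topspace ?Y. snd (unembB U d x) q = s}" by simp
qed

lemma cms_AutB: "completely_metrizable_space (AutB_topology U d)"
proof -
  have "homeomorphic_maps (AutB_topology U d) (subtopology (PP U d) (KB U d)) (embB U d) (unembB U d)"
    unfolding homeomorphic_maps_def
  proof (intro conjI ballI emb_continuous unemb_continuous)
    fix p assume "p \<in> topspace (AutB_topology U d)"
    then show "unembB U d (embB U d p) = p" using unemb_emb topspace_AutB[of U d] by (simp add: AutB_def)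
  next
    fix x assume "x \<in> topspace (subtopology (PP U d) (KB U d))"
    then show "embB U d (unembB U d x) = x" using emb_unemb by simp
  qed
  then have h: "AutB_topology U d homeomorphic_space subtopology (PP U d) (KB U d)"
    unfolding homeomorphic_space_def by blast
  have "completely_metrizable_space (subtopology (PP U d) (KB U d))"
    by (rule completely_metrizable_space_closedin[OF cms_PP[OF countable_balls] closed_KB])
  then show ?thesis using homeomorphic_completely_metrizable_space[OF h] by simp
qed

lemma Polish_group_AutB: "Polish_group (AutB U d) (AutB_topology U d)"
  unfolding Polish_group_def Polish_space_top_def
  using topological_group_AutB cms_AutB separable_AutB by blast

lemma Polish_group_AutM: "Polish_group (AutM X d) (AutM_topology X d)"
  unfolding Polish_group_def
proof
  show "topological_group (AutM X d) (AutM_topology X d)"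
    by (rule topological_group_transfer[OF group_AutM topspace_AutM beta_iso beta_homeo topological_group_AutB])
  show "Polish_space_top (AutM_topology X d)"
    by (rule Polish_transfer[OF beta_homeo]) (use Polish_group_AutB in \<open>simp add: Polish_group_def\<close>)
qed

lemma main: "Polish_group_iso (AutM X d) (AutM_topology X d) (AutB U d) (AutB_topology U d) (beta_bar U X d)"
  unfolding Polish_group_iso_def using Polish_group_AutM Polish_group_AutB beta_iso beta_homeo by blast

end

theorem proposition3p23:
  fixes U X :: "'a set" and d :: "'a \<Rightarrow> 'a \<Rightarrow> rat"
  assumes "rational_Urysohn_ultrametric U d"
    and "is_completion U X d"
  shows "Polish_group_iso (AutM X d) (AutM_topology X d) (AutB U d) (AutB_topology U d)
           (beta_bar U X d)"
proof -
  interpret UU U X d using assms by (rule UU.intro)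
  show ?thesis by (rule main)
qed

end
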